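(* Let $E$ be a real Banach space. For every $f\in H_0[E]_+$ there is a regular Borel probability measure $\mu$ on $(B_{E^{**}},w^* )$ such that $f(x^* )\le\|f\|_{FBL[E]}\,f_\mu(x^* )$ for all $x^*\in E^*$, where $f_\mu(x^* )=\int_{B_{E^{**}}}|x^*(\cdot)|\,d\mu$ (with $x^*(x^{**}):=x^{**}(x^* )$).
   Context: For a real Banach space $E$ with dual $E^*$ and closed unit ball $B_E$, let $H[E]$ be the vector space of all positively homogeneous functions $f:E^*\to\mathbb R$ ($f(\lambda x^* )=\lambda f(x^* )$ for $\lambda>0$). For $f\in H[E]$ put $\|f\|_{FBL[E]}:=\sup\{\sum_{k=1}^n|f(x_k^* )| : n\in\mathbb N,\ x_1^*,\dots,x_n^*\in E^*,\ \sup_{x\in B_E}\sum_{k=1}^n|x_k^*(x)|\le 1\}$. $H_0[E]:=\{f\in H[E]:\|f\|_{FBL[E]}<\infty\}$, a Banach lattice with this norm and pointwise order; $H_0[E]_+$ is its positive cone. *)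

theory Defs
  imports "HOL-Analysis.Analysis" "HOL-Probability.Probability"
begin

text \<open>The closed unit ball of the bidual with the weak-star topology, i.e. the
  initial topology of the evaluations at elements of the dual.\<close>
definition weak_star_bidual_ball :: "(('a::real_normed_vector \<Rightarrow>\<^sub>L real) \<Rightarrow>\<^sub>L real) topology" where
  "weak_star_bidual_ball =
     pullback_topology (cball 0 1) blinfun_apply (product_topology (\<lambda>_. euclideanreal) UNIV)"

definition borel_of :: "'a topology \<Rightarrow> 'a measure" where
  "borel_of T = sigma (topspace T) {U. openin T U}"

definition regular_measure_on :: "'a topology \<Rightarrow> 'a measure \<Rightarrow> bool" where
  "regular_measure_on T \<mu> \<longleftrightarrow>
     (\<forall>A\<in>sets \<mu>.
        emeasure \<mu> A = (SUP K\<in>{K. compactin T K \<and> K \<subseteq> A}. emeasure \<mu> K) \<and>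
        emeasure \<mu> A = (INF U\<in>{U. openin T U \<and> A \<subseteq> U}. emeasure \<mu> U))"

definition pos_homogeneous :: "(('a::real_normed_vector \<Rightarrow>\<^sub>L real) \<Rightarrow> real) \<Rightarrow> bool" where
  "pos_homogeneous f \<longleftrightarrow> (\<forall>x c. c > 0 \<longrightarrow> f (c *\<^sub>R x) = c * f x)"

definition fbl_admissible :: "('a::real_normed_vector \<Rightarrow>\<^sub>L real) list \<Rightarrow> bool" where
  "fbl_admissible xs \<longleftrightarrow> (\<forall>x::'a. norm x \<le> 1 \<longrightarrow> (\<Sum>y\<leftarrow>xs. \<bar>y x\<bar>) \<le> 1)"

definition fbl_sums :: "(('a::real_normed_vector \<Rightarrow>\<^sub>L real) \<Rightarrow> real) \<Rightarrow> real set" where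
  "fbl_sums f = {(\<Sum>y\<leftarrow>xs. \<bar>f y\<bar>) | xs. fbl_admissible xs}"

definition fbl_norm :: "(('a::real_normed_vector \<Rightarrow>\<^sub>L real) \<Rightarrow> real) \<Rightarrow> real" where
  "fbl_norm f = Sup (fbl_sums f)"

definition H0 :: "(('a::real_normed_vector \<Rightarrow>\<^sub>L real) \<Rightarrow> real) set" where
  "H0 = {f. pos_homogeneous f \<and> bdd_above (fbl_sums f)}"

definition H0_pos :: "(('a::real_normed_vector \<Rightarrow>\<^sub>L real) \<Rightarrow> real) set" where
  "H0_pos = {f. f \<in> H0 \<and> (\<forall>x. 0 \<le> f x)}"

end

theory Submission
  imports Defs
begin


definition fadd :: "('b \<Rightarrow> real) \<Rightarrow> ('b \<Rightarrow> real) \<Rightarrow> 'b \<Rightarrow> real" where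
  "fadd x y = (\<lambda>u. x u + y u)"
definition fsc :: "real \<Rightarrow> ('b \<Rightarrow> real) \<Rightarrow> 'b \<Rightarrow> real" where
  "fsc c x = (\<lambda>u. c * x u)"

definition hb_good :: "('b \<Rightarrow> real) set \<Rightarrow> (('b \<Rightarrow> real) \<Rightarrow> real) \<Rightarrow> (('b \<Rightarrow> real) \<times> real) set \<Rightarrow> bool" where
  "hb_good V p G \<longleftrightarrow> (\<forall>x a. (x,a)\<in>G \<longrightarrow> x\<in>V \<and> a \<le> p x) \<and>
     (\<forall>x a b. (x,a)\<in>G \<longrightarrow> (x,b)\<in>G \<longrightarrow> a = b) \<and> ((\<lambda>_. 0), 0) \<in> G \<and>
     (\<forall>x a y b. (x,a)\<in>G \<longrightarrow> (y,b)\<in>G \<longrightarrow> (fadd x y, a + b) \<in> G) \<and>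
     (\<forall>x a c. (x,a)\<in>G \<longrightarrow> (fsc c x, c * a) \<in> G)"

lemma hb_goodD:
  assumes "hb_good V p G"
  shows hb_good_V: "\<And>x a. (x,a)\<in>G \<Longrightarrow> x\<in>V"
    and hb_good_p: "\<And>x a. (x,a)\<in>G \<Longrightarrow> a \<le> p x"
    and hb_good_f: "\<And>x a b. (x,a)\<in>G \<Longrightarrow> (x,b)\<in>G \<Longrightarrow> a = b"
    and hb_good_0: "((\<lambda>_. 0), 0) \<in> G"
    and hb_good_add: "\<And>x a y b. (x,a)\<in>G \<Longrightarrow> (y,b)\<in>G \<Longrightarrow> (fadd x y, a + b) \<in> G"
    and hb_good_sc: "\<And>x a c. (x,a)\<in>G \<Longrightarrow> (fsc c x, c * a) \<in> G"
  using assms unfolding hb_good_def by blast+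

lemma hb_goodI:
  assumes "\<And>x a. (x,a)\<in>G \<Longrightarrow> x\<in>V"
    and "\<And>x a. (x,a)\<in>G \<Longrightarrow> a \<le> p x"
    and "\<And>x a b. (x,a)\<in>G \<Longrightarrow> (x,b)\<in>G \<Longrightarrow> a = b"
    and "((\<lambda>_. 0), 0) \<in> G"
    and "\<And>x a y b. (x,a)\<in>G \<Longrightarrow> (y,b)\<in>G \<Longrightarrow> (fadd x y, a + b) \<in> G"
    and "\<And>x a c. (x,a)\<in>G \<Longrightarrow> (fsc c x, c * a) \<in> G"
  shows "hb_good V p G"
  using assms unfolding hb_good_def by blast

locale hb_setting =
  fixes V :: "('b \<Rightarrow> real) set" and p :: "('b \<Rightarrow> real) \<Rightarrow> real"
  assumes V0: "(\<lambda>_. 0) \<in> V"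
  and Vadd: "\<And>x y. x\<in>V \<Longrightarrow> y\<in>V \<Longrightarrow> fadd x y \<in> V"
  and Vsc: "\<And>c x. x\<in>V \<Longrightarrow> fsc c x \<in> V"
  and psub: "\<And>x y. x\<in>V \<Longrightarrow> y\<in>V \<Longrightarrow> p (fadd x y) \<le> p x + p y"
  and phom: "\<And>c x. x\<in>V \<Longrightarrow> c > 0 \<Longrightarrow> p (fsc c x) = c * p x"
begin

lemma p0: "p (\<lambda>_. 0) = 0"
proof -
  have "fsc 2 (\<lambda>_. 0) = (\<lambda>_::'b. 0::real)" by (simp add: fsc_def)
  with phom[OF V0, of 2] show ?thesis by simp
qed

lemma extend:
  assumes g: "hb_good V p G" and h0: "h0 \<in> V" and nd: "h0 \<notin> fst ` G"
  shows "\<exists>G'. hb_good V p G' \<and> G \<subset> G'"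
proof -
  have GV: "\<And>x a. (x,a)\<in>G \<Longrightarrow> x \<in> V" and Gp: "\<And>x a. (x,a)\<in>G \<Longrightarrow> a \<le> p x"
    and Gf: "\<And>x a b. (x,a)\<in>G \<Longrightarrow> (x,b)\<in>G \<Longrightarrow> a = b"
    and G0: "((\<lambda>_. 0), 0) \<in> G"
    and Gadd: "\<And>x a y b. (x,a)\<in>G \<Longrightarrow> (y,b)\<in>G \<Longrightarrow> (fadd x y, a + b) \<in> G"
    and Gsc: "\<And>x a c. (x,a)\<in>G \<Longrightarrow> (fsc c x, c * a) \<in> G"
    using hb_goodD[OF g] by auto
  define m where "m = fsc (-1) h0"
  have mV: "m \<in> V" using h0 Vsc m_def by blast
  have key: "a - p (fadd s m) \<le> p (fadd t h0) - b" if "(s,a)\<in>G" "(t,b)\<in>G" for s a t b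
  proof -
    have "a + b \<le> p (fadd s t)" using Gp[OF Gadd[OF that]] .
    also have "fadd s t = fadd (fadd s m) (fadd t h0)"
      by (auto simp: fadd_def fsc_def m_def)
    also have "p \<dots> \<le> p (fadd s m) + p (fadd t h0)"
      using GV that mV h0 by (intro psub Vadd) auto
    finally show ?thesis by simp
  qed
  define S where "S = {a - p (fadd s m) | s a. (s,a)\<in>G}"
  define c where "c = Sup S"
  have Sne: "S \<noteq> {}" using G0 S_def by blast
  have Sbdd: "bdd_above S"
    unfolding S_def bdd_above_def using key[OF _ G0] by auto
  have c1: "a - p (fadd s m) \<le> c" if "(s,a)\<in>G" for s a
    unfolding c_def by (rule cSup_upper[OF _ Sbdd]) (use that S_def in blast)
  have c2: "c \<le> p (fadd t h0) - b" if "(t,b)\<in>G" for t b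
    unfolding c_def by (rule cSup_least[OF Sne]) (use key that S_def in blast)
  define G' where "G' = {(fadd s (fsc l h0), a + l * c) | s a l. (s,a)\<in>G}"
  have G'V: "x \<in> V" if "(x,a)\<in>G'" for x a
    using that GV h0 unfolding G'_def by (auto intro!: Vadd Vsc)
  have G'p: "a \<le> p x" if xa: "(x,a)\<in>G'" for x a
  proof -
    obtain s b l where x: "x = fadd s (fsc l h0)" and a: "a = b + l * c" and sb: "(s,b)\<in>G"
      using xa G'_def by blast
    have sV: "s \<in> V" using GV sb by blast
    consider "l > 0" | "l = 0" | "l < 0" by linarith
    then show ?thesis
    proof cases
      case 1
      have t: "(fsc (1/l) s, (1/l) * b) \<in> G" using Gsc[OF sb] .
      have "c \<le> p (fadd (fsc (1/l) s) h0) - (1/l)*b" using c2[OF t] .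
      moreover have "fsc l (fadd (fsc (1/l) s) h0) = x" using 1
        by (auto simp: x fadd_def fsc_def algebra_simps)
      moreover have "p (fsc l (fadd (fsc (1/l) s) h0)) = l * p (fadd (fsc (1/l) s) h0)"
        using 1 sV h0 by (intro phom Vadd Vsc) auto
      ultimately have "l * c \<le> l * (p (fadd (fsc (1/l) s) h0) - (1/l)*b)" "p x = l * p (fadd (fsc (1/l) s) h0)"
        using 1 by (auto intro: mult_left_mono)
      moreover have "l * (p (fadd (fsc (1/l) s) h0) - (1/l)*b) = l * p (fadd (fsc (1/l) s) h0) - b"
        using 1 by (simp add: right_diff_distrib)
      ultimately have "l * c \<le> p x - b" by simp
      then show ?thesis using a by simp
    next
      case 2
      have "x = s" by (auto simp: x 2 fadd_def fsc_def)
      then show ?thesis using Gp[OF sb] a 2 by simp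
    next
      case 3
      define k where "k = -l"
      have k: "k > 0" using 3 k_def by simp
      have t: "(fsc (1/k) s, (1/k) * b) \<in> G" using Gsc[OF sb] .
      have "(1/k)*b - p (fadd (fsc (1/k) s) m) \<le> c" using c1[OF t] .
      moreover have "fsc k (fadd (fsc (1/k) s) m) = x" using k
        by (auto simp: x fadd_def fsc_def m_def k_def algebra_simps)
      moreover have "p (fsc k (fadd (fsc (1/k) s) m)) = k * p (fadd (fsc (1/k) s) m)"
        using k sV mV by (intro phom Vadd Vsc) auto
      ultimately have "k * ((1/k)*b - p (fadd (fsc (1/k) s) m)) \<le> k * c" "p x = k * p (fadd (fsc (1/k) s) m)"
        using k by (auto intro: mult_left_mono)
      moreover have "k * ((1/k)*b - p (fadd (fsc (1/k) s) m)) = b - k * p (fadd (fsc (1/k) s) m)"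
        using k by (simp add: right_diff_distrib)
      ultimately have "b - p x \<le> k * c" by simp
      then show ?thesis using a k_def by simp
    qed
  qed
  have G'f: "a = b" if xa: "(x,a)\<in>G'" and xb: "(x,b)\<in>G'" for x a b
  proof -
    obtain s a0 l where x: "x = fadd s (fsc l h0)" and a: "a = a0 + l * c" and sa: "(s,a0)\<in>G"
      using xa G'_def by blast
    obtain t b0 k where x': "x = fadd t (fsc k h0)" and b: "b = b0 + k * c" and tb: "(t,b0)\<in>G"
      using xb G'_def by blast
    have lk: "l = k"
    proof (rule ccontr)
      assume ne: "l \<noteq> k"
      have "(fadd t (fsc (-1) s), b0 + (-1) * a0) \<in> G" using Gadd[OF tb Gsc[OF sa]] .
      then have "(fsc (1/(l-k)) (fadd t (fsc (-1) s)), (1/(l-k)) * (b0 + (-1) * a0)) \<in> G"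
        by (rule Gsc)
      moreover have "fsc (1/(l-k)) (fadd t (fsc (-1) s)) = h0"
      proof
        fix u
        have "s u + l * h0 u = t u + k * h0 u"
          using fun_cong[OF x[symmetric], of u] fun_cong[OF x', of u] by (simp add: fadd_def fsc_def)
        then have "t u - s u = (l - k) * h0 u" by (simp add: algebra_simps)
        then show "fsc (1/(l-k)) (fadd t (fsc (-1) s)) u = h0 u" using ne
          by (simp add: fsc_def fadd_def)
      qed
      ultimately have "h0 \<in> fst ` G" by force
      then show False using nd by blast
    qed
    have "s = t"
    proof
      fix u show "s u = t u"
        using fun_cong[OF x[symmetric], of u] fun_cong[OF x', of u] lk by (simp add: fadd_def fsc_def)
    qed
    then show ?thesis using Gf sa tb a b lk by blast
  qed
  have G'0: "((\<lambda>_. 0), 0) \<in> G'"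
  proof -
    have "fadd (\<lambda>_. 0) (fsc 0 h0) = (\<lambda>_. 0)" by (simp add: fadd_def fsc_def)
    then show ?thesis unfolding G'_def using G0 by force
  qed
  have G'add: "(fadd x y, a + b) \<in> G'" if xa: "(x,a)\<in>G'" and xb: "(y,b)\<in>G'" for x a y b
  proof -
    obtain s a0 l where x: "x = fadd s (fsc l h0)" and a: "a = a0 + l * c" and sa: "(s,a0)\<in>G"
      using xa G'_def by blast
    obtain t b0 k where y: "y = fadd t (fsc k h0)" and b: "b = b0 + k * c" and tb: "(t,b0)\<in>G"
      using xb G'_def by blast
    have "fadd x y = fadd (fadd s t) (fsc (l+k) h0)"
      by (auto simp: x y fadd_def fsc_def algebra_simps)
    moreover have "a + b = (a0 + b0) + (l+k) * c" by (simp add: a b algebra_simps)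
    ultimately show ?thesis unfolding G'_def using Gadd[OF sa tb] by blast
  qed
  have G'sc: "(fsc r x, r * a) \<in> G'" if xa: "(x,a)\<in>G'" for x a r
  proof -
    obtain s a0 l where x: "x = fadd s (fsc l h0)" and a: "a = a0 + l * c" and sa: "(s,a0)\<in>G"
      using xa G'_def by blast
    have "fsc r x = fadd (fsc r s) (fsc (r*l) h0)"
      by (auto simp: x fadd_def fsc_def algebra_simps)
    moreover have "r * a = r * a0 + (r*l) * c" by (simp add: a algebra_simps)
    ultimately show ?thesis unfolding G'_def using Gsc[OF sa] by blast
  qed
  have good': "hb_good V p G'"
    by (rule hb_goodI[OF G'V G'p G'f G'0 G'add G'sc])
  have sub: "G \<subseteq> G'"
  proof
    fix z assume z: "z \<in> G"
    obtain s a where za: "z = (s,a)" by (cases z)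
    have "fadd s (fsc 0 h0) = s" by (simp add: fadd_def fsc_def)
    then show "z \<in> G'" using z za unfolding G'_def by force
  qed
  have "(h0, c) \<in> G'"
  proof -
    have "fadd (\<lambda>_. 0) (fsc 1 h0) = h0" by (simp add: fadd_def fsc_def)
    then show ?thesis unfolding G'_def using G0 by force
  qed
  then have "G \<noteq> G'" using nd by force
  with sub good' show ?thesis by blast
qed

theorem hahn_banach:
  "\<exists>\<phi>. (\<forall>x\<in>V. \<forall>y\<in>V. \<phi> (fadd x y) = \<phi> x + \<phi> y) \<and>
       (\<forall>x\<in>V. \<forall>c. \<phi> (fsc c x) = c * \<phi> x) \<and> (\<forall>x\<in>V. \<phi> x \<le> p x)"
proof -
  define A where "A = {G. hb_good V p G}"
  have zero_good: "hb_good V p {((\<lambda>_. 0), 0)}"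
  proof -
    have a: "fadd (\<lambda>_. 0) (\<lambda>_. 0) = (\<lambda>_::'b. 0::real)" by (simp add: fadd_def)
    have b: "\<And>c. fsc c (\<lambda>_. 0) = (\<lambda>_::'b. 0::real)" by (simp add: fsc_def)
    show ?thesis by (rule hb_goodI) (use a b V0 p0 in auto)
  qed
  have "\<forall>C\<in>chains A. \<exists>U\<in>A. \<forall>X\<in>C. X \<subseteq> U"
  proof
    fix C assume C: "C \<in> chains A"
    show "\<exists>U\<in>A. \<forall>X\<in>C. X \<subseteq> U"
    proof (cases "C = {}")
      case True then show ?thesis using zero_good A_def by blast
    next
      case False
      have CA: "\<And>X. X \<in> C \<Longrightarrow> hb_good V p X" 
      proof -
        have "C \<subseteq> A" using C by (simp add: chains_def)
        then show "\<And>X. X \<in> C \<Longrightarrow> hb_good V p X" unfolding A_def by blast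
      qed
      have ch: "\<And>X Y. X \<in> C \<Longrightarrow> Y \<in> C \<Longrightarrow> X \<subseteq> Y \<or> Y \<subseteq> X"
        using C unfolding chains_def chain_subset_def by blast
      have "hb_good V p (\<Union>C)"
      proof (rule hb_goodI)
        fix x a assume "(x,a) \<in> \<Union>C"
        then show "x \<in> V" using CA hb_good_V by blast
      next
        fix x a assume "(x,a) \<in> \<Union>C"
        then show "a \<le> p x" using CA hb_good_p by blast
      next
        fix x a b assume "(x,a) \<in> \<Union>C" "(x,b) \<in> \<Union>C"
        then obtain X Y where XY: "X\<in>C" "Y\<in>C" "(x,a)\<in>X" "(x,b)\<in>Y" by blast
        show "a = b"
        proof (cases "X \<subseteq> Y")
          case True then show ?thesis using XY CA[of Y] hb_good_f by blast
        next
          case False then have "Y \<subseteq> X" using ch XY by blast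
          then show ?thesis using XY CA[of X] hb_good_f by blast
        qed
      next
        obtain X where "X \<in> C" using False by blast
        then show "((\<lambda>_. 0), 0) \<in> \<Union>C" using CA hb_good_0 by blast
      next
        fix x a y b assume "(x,a) \<in> \<Union>C" "(y,b) \<in> \<Union>C"
        then obtain X Y where XY: "X\<in>C" "Y\<in>C" "(x,a)\<in>X" "(y,b)\<in>Y" by blast
        show "(fadd x y, a + b) \<in> \<Union>C"
        proof (cases "X \<subseteq> Y")
          case True then show ?thesis using XY CA[of Y] hb_good_add by blast
        next
          case False then have "Y \<subseteq> X" using ch XY by blast
          then show ?thesis using XY CA[of X] hb_good_add by blast
        qed
      next
        fix x a c assume "(x,a) \<in> \<Union>C"
        then show "(fsc c x, c * a) \<in> \<Union>C" using CA hb_good_sc by blast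
      qed
      then show ?thesis using A_def by blast
    qed
  qed
  from Zorn_Lemma2[OF this] obtain M where MA: "M \<in> A" and max: "\<forall>X\<in>A. M \<subseteq> X \<longrightarrow> X = M"
    by blast
  have Mg: "hb_good V p M" using MA A_def by blast
  have dom: "x \<in> fst ` M" if "x \<in> V" for x
  proof (rule ccontr)
    assume "x \<notin> fst ` M"
    from extend[OF Mg that this] obtain G' where "hb_good V p G'" "M \<subset> G'" by blast
    then show False using max A_def by blast
  qed
  define \<phi> where "\<phi> x = (THE a. (x,a) \<in> M)" for x
  have uniq: "\<phi> x = a" if "(x,a) \<in> M" for x a
    unfolding \<phi>_def apply (rule the_equality) using hb_good_f[OF Mg] that by blast+
  have phiM: "(x, \<phi> x) \<in> M" if xV: "x \<in> V" for x
  proof -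
    obtain a where a: "(x,a)\<in>M" using dom[OF xV] by force
    then show ?thesis using uniq[OF a] by simp
  qed
  show ?thesis
  proof (intro exI conjI ballI allI)
    fix x y assume "x \<in> V" "y \<in> V"
    then show "\<phi> (fadd x y) = \<phi> x + \<phi> y"
      by (intro uniq hb_good_add[OF Mg] phiM)
  next
    fix x c assume "x \<in> V"
    then show "\<phi> (fsc c x) = c * \<phi> x"
      by (intro uniq hb_good_sc[OF Mg] phiM)
  next
    fix x assume "x \<in> V"
    then show "\<phi> x \<le> p x" by (rule hb_good_p[OF Mg phiM])
  qed
qed

end


locale riesz_setting =
  fixes X :: "'b topology" and \<phi> :: "('b \<Rightarrow> real) \<Rightarrow> real"
  assumes cpt: "compact_space X" and hd: "Hausdorff_space X"
  and ne: "topspace X \<noteq> {}"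
  and lin_add: "\<And>h k. continuous_map X euclideanreal h \<Longrightarrow> continuous_map X euclideanreal k \<Longrightarrow>
     \<phi> (\<lambda>x. h x + k x) = \<phi> h + \<phi> k"
  and lin_sc: "\<And>c h. continuous_map X euclideanreal h \<Longrightarrow> \<phi> (\<lambda>x. c * h x) = c * \<phi> h"
  and bound: "\<And>h. continuous_map X euclideanreal h \<Longrightarrow> \<phi> h \<le> Sup (h ` topspace X)"
begin

abbreviation "K \<equiv> topspace X"
abbreviation "CC h \<equiv> continuous_map X euclideanreal h"

lemma phi_diff: "CC h \<Longrightarrow> CC k \<Longrightarrow> \<phi> (\<lambda>x. h x - k x) = \<phi> h - \<phi> k"
proof -
  assume h: "CC h" and k: "CC k"
  have "\<phi> (\<lambda>x. h x + (-1) * k x) = \<phi> h + \<phi> (\<lambda>x. (-1) * k x)"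
    using h k by (intro lin_add continuous_intros)
  also have "\<phi> (\<lambda>x. (-1) * k x) = - \<phi> k" using lin_sc[OF k, of "-1"] by simp
  finally show ?thesis by simp
qed

lemma phi_le0: "CC h \<Longrightarrow> (\<And>x. x \<in> K \<Longrightarrow> h x \<le> 0) \<Longrightarrow> \<phi> h \<le> 0"
proof -
  assume h: "CC h" and le: "\<And>x. x \<in> K \<Longrightarrow> h x \<le> 0"
  have "Sup (h ` K) \<le> 0" using ne le by (intro cSup_least) auto
  then show ?thesis using bound[OF h] by simp
qed

lemma phi_mono: "CC h \<Longrightarrow> CC k \<Longrightarrow> (\<And>x. x \<in> K \<Longrightarrow> h x \<le> k x) \<Longrightarrow> \<phi> h \<le> \<phi> k"
proof -
  assume h: "CC h" and k: "CC k" and le: "\<And>x. x \<in> K \<Longrightarrow> h x \<le> k x"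
  have "\<phi> (\<lambda>x. h x - k x) \<le> 0" using h k le by (intro phi_le0 continuous_intros) auto
  then show ?thesis using phi_diff[OF h k] by simp
qed

lemma phi_cong: "CC h \<Longrightarrow> CC k \<Longrightarrow> (\<And>x. x \<in> K \<Longrightarrow> h x = k x) \<Longrightarrow> \<phi> h = \<phi> k"
proof -
  assume a: "CC h" "CC k" "\<And>x. x \<in> K \<Longrightarrow> h x = k x"
  have "\<phi> h \<le> \<phi> k" using a by (intro phi_mono) auto
  moreover have "\<phi> k \<le> \<phi> h" using a by (intro phi_mono) auto
  ultimately show ?thesis by simp
qed

lemma phi_zero: "\<phi> (\<lambda>_. 0) = 0"
  using lin_sc[of "\<lambda>_. 0" 0] by simp

lemma phi_const: "\<phi> (\<lambda>_. c) = c"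
proof -
  have "Sup ((\<lambda>_. 1::real) ` K) = 1" using ne by simp
  then have a: "\<phi> (\<lambda>_. 1) \<le> 1" using bound[of "\<lambda>_. 1"] by simp
  have "Sup ((\<lambda>_. -1::real) ` K) = -1" using ne by simp
  then have "\<phi> (\<lambda>_. -1) \<le> -1" using bound[of "\<lambda>_. -1"] by simp
  moreover have "\<phi> (\<lambda>_. -1) = - \<phi> (\<lambda>_. 1)" using lin_sc[of "\<lambda>_. 1" "-1"] by simp
  ultimately have "\<phi> (\<lambda>_. 1) = 1" using a by simp
  then show ?thesis using lin_sc[of "\<lambda>_. 1" c] by simp
qed

lemma phi_sum: "finite F \<Longrightarrow> (\<And>i. i \<in> F \<Longrightarrow> CC (k i)) \<Longrightarrow> \<phi> (\<lambda>x. \<Sum>i\<in>F. k i x) = (\<Sum>i\<in>F. \<phi> (k i))"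
proof (induction F rule: finite_induct)
  case empty then show ?case using phi_zero by simp
next
  case (insert j F)
  have "\<phi> (\<lambda>x. \<Sum>i\<in>insert j F. k i x) = \<phi> (\<lambda>x. k j x + (\<Sum>i\<in>F. k i x))"
    using insert by simp
  also have "\<dots> = \<phi> (k j) + \<phi> (\<lambda>x. \<Sum>i\<in>F. k i x)"
    using insert by (intro lin_add continuous_intros) auto
  finally show ?case using insert by simp
qed

definition adm :: "'b set \<Rightarrow> ('b \<Rightarrow> real) \<Rightarrow> bool" where
  "adm U h \<longleftrightarrow> CC h \<and> (\<forall>x\<in>K. 0 \<le> h x \<and> h x \<le> 1) \<and> (\<forall>x\<in>K - U. h x = 0)"

definition nu :: "'b set \<Rightarrow> real" where
  "nu U = Sup {\<phi> h | h. adm U h}"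

lemma adm0: "adm U (\<lambda>_. 0)" unfolding adm_def by simp

lemma adm_le1: "adm U h \<Longrightarrow> \<phi> h \<le> 1"
  using phi_mono[of h "\<lambda>_. 1"] phi_const[of 1] unfolding adm_def by auto

lemma adm_ge0: "adm U h \<Longrightarrow> 0 \<le> \<phi> h"
  using phi_mono[of "\<lambda>_. 0" h] phi_zero unfolding adm_def by auto

lemma nu_bdd: "bdd_above {\<phi> h | h. adm U h}"
  unfolding bdd_above_def using adm_le1 by blast

lemma nu_upper: "adm U h \<Longrightarrow> \<phi> h \<le> nu U"
  unfolding nu_def by (rule cSup_upper[OF _ nu_bdd]) blast

lemma nu_least: "(\<And>h. adm U h \<Longrightarrow> \<phi> h \<le> c) \<Longrightarrow> nu U \<le> c"
  unfolding nu_def using adm0 by (intro cSup_least) auto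

lemma nu_ge0: "0 \<le> nu U"
  using nu_upper[OF adm0] phi_zero by simp

lemma nu_le1: "nu U \<le> 1"
  using nu_least adm_le1 by blast

lemma nu_mono: "U \<subseteq> V \<Longrightarrow> nu U \<le> nu V"
  by (rule nu_least, rule nu_upper) (auto simp: adm_def)

lemma nu_empty: "nu {} = 0"
proof -
  have "\<phi> h \<le> 0" if "adm {} h" for h
    using that phi_le0[of h] unfolding adm_def by auto
  then have "nu {} \<le> 0" by (rule nu_least)
  then show ?thesis using nu_ge0[of "{}"] by simp
qed

lemma nu_K: "nu K = 1"
proof -
  have "adm K (\<lambda>_. 1)" unfolding adm_def by simp
  then have "1 \<le> nu K" using nu_upper phi_const[of 1] by fastforce
  then show ?thesis using nu_le1[of K] by simp
qed

lemma adm_inter: "adm U h \<Longrightarrow> adm (U \<inter> K) h"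
  unfolding adm_def by auto

lemma nu_inter: "nu (U \<inter> K) = nu U"
proof -
  have "nu U \<le> nu (U \<inter> K)" by (rule nu_least, rule nu_upper, erule adm_inter)
  moreover have "nu (U \<inter> K) \<le> nu U" by (rule nu_mono) auto
  ultimately show ?thesis by simp
qed

lemma creg: "completely_regular_space X"
proof -
  have "normal_space X" using cpt hd by (simp add: compact_Hausdorff_or_regular_imp_normal_space)
  then show ?thesis using hd by (simp add: normal_imp_completely_regular_space)
qed

lemma bump:
  assumes U: "openin X U" and x: "x \<in> U"
  obtains g where "CC g" "\<And>y. y \<in> K \<Longrightarrow> 0 \<le> g y \<and> g y \<le> 1" "g x = 1"
    "\<And>y. y \<in> K - U \<Longrightarrow> g y = 0"
proof -
  have c: "closedin X (K - U)" using U by (simp add: closedin_diff)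
  have xx: "x \<in> K - (K - U)" using U x openin_subset by blast
  have "\<exists>f::'b\<Rightarrow>real. continuous_map X (top_of_set {0..1}) f \<and> f x = 0 \<and> f ` (K - U) \<subseteq> {1}"
    using creg[unfolded completely_regular_space_def, rule_format, OF conjI[OF c xx]] .
  then obtain f :: "'b \<Rightarrow> real" where f: "continuous_map X (top_of_set {0..1}) f" "f x = 0" "f ` (K - U) \<subseteq> {1}"
    by blast
  have fc: "CC f" using f(1) continuous_map_into_fulltopology by blast
  have fr: "\<And>y. y \<in> K \<Longrightarrow> f y \<in> {0..1}"
    using continuous_map_image_subset_topspace[OF f(1)] by auto
  show ?thesis
  proof (rule that[of "\<lambda>y. 1 - f y"])
    show "CC (\<lambda>y. 1 - f y)" using fc by (intro continuous_intros)
  next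
    fix y assume "y \<in> K"
    then show "0 \<le> 1 - f y \<and> 1 - f y \<le> 1" using fr[of y] by simp
  next
    show "1 - f x = 1" using f(2) by simp
  next
    fix y assume "y \<in> K - U"
    then have "f y = 1" using f(3) by blast
    then show "1 - f y = 0" by simp
  qed
qed

end


context riesz_setting
begin

lemma nu_sub_finite:
  assumes U: "\<And>i. openin X (U i)" and h: "adm (\<Union>i. U i) h" and e: "\<epsilon> > 0"
  shows "\<exists>F. finite F \<and> \<phi> h \<le> \<epsilon> + (\<Sum>i\<in>F. nu (U i))"
proof -
  have hC: "CC h" and h01: "\<And>x. x \<in> K \<Longrightarrow> 0 \<le> h x \<and> h x \<le> 1"
    and h0: "\<And>x. x \<in> K - (\<Union>i. U i) \<Longrightarrow> h x = 0"
    using h unfolding adm_def by auto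
  define h' where "h' = (\<lambda>x. max (h x - \<epsilon>) 0)"
  have h'C: "CC h'" unfolding h'_def using hC by (intro continuous_intros)
  define S where "S = {x \<in> K. h x \<in> {\<epsilon>..}}"
  have "closedin X S" unfolding S_def
    by (rule closedin_continuous_map_preimage[OF hC]) simp
  then have Sc: "compactin X S" using cpt closedin_compact_space by blast
  have SU: "\<exists>i. x \<in> U i" if "x \<in> S" for x
  proof (rule ccontr)
    assume "\<not> (\<exists>i. x \<in> U i)"
    then have "h x = 0" using that h0 S_def by auto
    then show False using that S_def e by auto
  qed
  then obtain ix where ix: "\<And>x. x \<in> S \<Longrightarrow> x \<in> U (ix x)" by metis
  have "\<exists>g. CC g \<and> (\<forall>y\<in>K. 0 \<le> g y \<and> g y \<le> 1) \<and> g x = 1 \<and> (\<forall>y\<in>K - U (ix x). g y = 0)"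
    if xS: "x \<in> S" for x
  proof -
    obtain g where "CC g" "\<And>y. y \<in> K \<Longrightarrow> 0 \<le> g y \<and> g y \<le> 1" "g x = 1"
      "\<And>y. y \<in> K - U (ix x) \<Longrightarrow> g y = 0"
      using bump[OF U ix[OF xS]] by blast
    then show ?thesis by blast
  qed
  then obtain gx where gx: "\<And>x. x \<in> S \<Longrightarrow> CC (gx x)"
    "\<And>x y. x \<in> S \<Longrightarrow> y \<in> K \<Longrightarrow> 0 \<le> gx x y \<and> gx x y \<le> 1"
    "\<And>x. x \<in> S \<Longrightarrow> gx x x = 1"
    "\<And>x y. x \<in> S \<Longrightarrow> y \<in> K - U (ix x) \<Longrightarrow> gx x y = 0"
    by metis
  define W where "W x = {y \<in> K. gx x y \<in> {1/2<..}}" for x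
  have Wo: "openin X (W x)" if "x \<in> S" for x
    unfolding W_def by (rule openin_continuous_map_preimage[OF gx(1)[OF that]]) simp
  have SW: "S \<subseteq> \<Union>(W ` S)"
  proof
    fix x assume x: "x \<in> S"
    then have "x \<in> W x" using gx(3)[OF x] S_def W_def by auto
    then show "x \<in> \<Union>(W ` S)" using x by blast
  qed
  obtain F where F: "finite F" "F \<subseteq> W ` S" "S \<subseteq> \<Union>F"
    using Sc SW Wo unfolding compactin_def by (metis (no_types, lifting) image_iff)
  obtain P where P: "P \<subseteq> S" "finite P" "F = W ` P"
    using finite_subset_image[OF F(1,2)] by blast
  have SP: "S \<subseteq> \<Union>(W ` P)" using F P by simp
  define FI where "FI = ix ` P"
  have FI: "finite FI" using P FI_def by simp
  define ee where "ee j = (\<lambda>y. \<Sum>x\<in>{x\<in>P. ix x = j}. gx x y)" for j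
  define k where "k j = (\<lambda>y. min (h' y) (2 * ee j y))" for j
  have ee_nn: "0 \<le> ee j y" if "y \<in> K" for j y
    unfolding ee_def using gx(2) P(1) that by (intro sum_nonneg) auto
  have h'01: "0 \<le> h' y \<and> h' y \<le> 1" if "y \<in> K" for y
    using h01[OF that] e unfolding h'_def by auto
  have kadm: "adm (U j) (k j)" for j
    unfolding adm_def
  proof (intro conjI ballI)
    show "CC (k j)" unfolding k_def ee_def
      using h'C gx(1) P by (intro continuous_intros) (auto simp: finite_subset)
  next
    fix y assume y: "y \<in> K"
    show "0 \<le> k j y" using ee_nn[OF y] h'01[OF y] unfolding k_def by simp
    show "k j y \<le> 1" using h'01[OF y] unfolding k_def by (simp add: min_le_iff_disj)
  next
    fix y assume y: "y \<in> K - U j"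
    have "ee j y = 0" unfolding ee_def
      using gx(4) P(1) y by (intro sum.neutral) auto
    then show "k j y = 0" using h'01 y unfolding k_def by simp
  qed
  have cover: "h' y \<le> (\<Sum>j\<in>FI. k j y)" if y: "y \<in> K" for y
  proof (cases "h y < \<epsilon>")
    case True
    then have "h' y = 0" unfolding h'_def by simp
    moreover have "0 \<le> (\<Sum>j\<in>FI. k j y)" using kadm y unfolding adm_def by (intro sum_nonneg) auto
    ultimately show ?thesis by simp
  next
    case False
    then have "y \<in> S" using y S_def by auto
    then obtain x where x: "x \<in> P" "y \<in> W x" using SP by blast
    then have gxy: "gx x y > 1/2" using W_def by auto
    define j where "j = ix x"
    have jFI: "j \<in> FI" using x j_def FI_def by blast
    have "gx x y \<le> ee j y" unfolding ee_def
      using x P gx(2) y j_def by (intro member_le_sum) (auto simp: finite_subset)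
    then have "k j y = h' y" using gxy h'01[OF y] unfolding k_def by simp
    moreover have "k j y \<le> (\<Sum>j\<in>FI. k j y)"
      using kadm y jFI FI unfolding adm_def by (intro member_le_sum) auto
    ultimately show ?thesis by simp
  qed
  have kC: "CC (k j)" for j using kadm unfolding adm_def by blast
  have "\<phi> h \<le> \<phi> (\<lambda>y. h' y + \<epsilon>)"
    using hC h'C by (intro phi_mono continuous_intros) (auto simp: h'_def)
  also have "\<dots> = \<phi> h' + \<epsilon>"
    using lin_add[OF h'C, of "\<lambda>_. \<epsilon>"] phi_const by simp
  also have "\<phi> h' \<le> \<phi> (\<lambda>y. \<Sum>j\<in>FI. k j y)"
    using h'C kC FI cover by (intro phi_mono continuous_intros) auto
  also have "\<dots> = (\<Sum>j\<in>FI. \<phi> (k j))" using phi_sum[OF FI] kC by blast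
  also have "\<dots> \<le> (\<Sum>j\<in>FI. nu (U j))" using kadm nu_upper by (intro sum_mono) auto
  finally show ?thesis using FI by (auto simp: add.commute)
qed

end


context riesz_setting
begin

lemma nu_csub:
  assumes U: "\<And>i. openin X (U i)" and s: "summable (\<lambda>i. nu (U i))"
  shows "nu (\<Union>i. U i) \<le> (\<Sum>i. nu (U i))"
proof (rule nu_least)
  fix h assume h: "adm (\<Union>i. U i) h"
  show "\<phi> h \<le> (\<Sum>i. nu (U i))"
  proof (rule field_le_epsilon)
    fix e :: real assume e: "0 < e"
    obtain F where F: "finite F" "\<phi> h \<le> e + (\<Sum>i\<in>F. nu (U i))"
      using nu_sub_finite[OF U h e] by blast
    have "(\<Sum>i\<in>F. nu (U i)) \<le> (\<Sum>i. nu (U i))"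
      using s F(1) nu_ge0 by (intro sum_le_suminf) auto
    then show "\<phi> h \<le> (\<Sum>i. nu (U i)) + e" using F by simp
  qed
qed

lemma nu_union2:
  assumes "openin X V1" "openin X V2"
  shows "nu (V1 \<union> V2) \<le> nu V1 + nu V2"
proof -
  define U where "U i = (if i = 0 then V1 else if i = (1::nat) then V2 else {})" for i
  have Uo: "openin X (U i)" for i unfolding U_def using assms by simp
  have z: "nu (U n) = 0" if "n \<notin> {0,1}" for n unfolding U_def using that nu_empty by simp
  have sm: "summable (\<lambda>i. nu (U i))"
    by (rule summable_finite[of "{0,1}"]) (use z in auto)
  have "(\<Sum>i. nu (U i)) = (\<Sum>i\<in>{0,1}. nu (U i))" by (rule suminf_finite) (use z in auto)
  also have "\<dots> = nu V1 + nu V2" by (simp add: U_def)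
  finally have e: "(\<Sum>i. nu (U i)) = nu V1 + nu V2" .
  have "(\<Union>i. U i) = V1 \<union> V2"
  proof
    show "(\<Union>i. U i) \<subseteq> V1 \<union> V2"
    proof
      fix x assume "x \<in> (\<Union>i. U i)"
      then obtain i where "x \<in> U i" by blast
      then show "x \<in> V1 \<union> V2" unfolding U_def by (simp split: if_splits)
    qed
    show "V1 \<union> V2 \<subseteq> (\<Union>i. U i)"
    proof
      fix x assume "x \<in> V1 \<union> V2"
      then show "x \<in> (\<Union>i. U i)"
      proof
        assume "x \<in> V1" then have "x \<in> U 0" unfolding U_def by simp
        then show ?thesis by blast
      next
        assume "x \<in> V2" then have "x \<in> U 1" unfolding U_def by simp
        then show ?thesis by blast
      qed
    qed
  qed
  then show ?thesis using nu_csub[OF Uo sm] e by simp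
qed

definition nus :: "'b set \<Rightarrow> real" where
  "nus A = Inf {nu U | U. openin X U \<and> A \<subseteq> U}"

lemma nus_set_ne: "A \<subseteq> K \<Longrightarrow> {nu U | U. openin X U \<and> A \<subseteq> U} \<noteq> {}"
  by blast

lemma nus_bdd: "bdd_below {nu U | U. openin X U \<and> A \<subseteq> U}"
  unfolding bdd_below_def using nu_ge0 by blast

lemma nus_le: "openin X U \<Longrightarrow> A \<subseteq> U \<Longrightarrow> nus A \<le> nu U"
  unfolding nus_def by (rule cInf_lower[OF _ nus_bdd]) blast

lemma nus_ge0: "A \<subseteq> K \<Longrightarrow> 0 \<le> nus A"
  unfolding nus_def by (rule cInf_greatest[OF nus_set_ne]) (use nu_ge0 in auto)

lemma nus_le1: "A \<subseteq> K \<Longrightarrow> nus A \<le> 1"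
  using nus_le[of K A] nu_K by simp

lemma nus_open: "openin X U \<Longrightarrow> nus U = nu U"
proof -
  assume U: "openin X U"
  have "nu U \<le> nus U" unfolding nus_def
    by (rule cInf_greatest) (use U nu_mono in auto)
  then show ?thesis using nus_le[OF U order_refl] by simp
qed

lemma nus_mono: "A \<subseteq> B \<Longrightarrow> B \<subseteq> K \<Longrightarrow> nus A \<le> nus B"
proof -
  assume ab: "A \<subseteq> B" and bk: "B \<subseteq> K"
  show ?thesis unfolding nus_def
    by (rule cInf_mono[OF nus_set_ne[OF bk] nus_bdd]) (use ab in blast)
qed

lemma nus_approx:
  assumes "A \<subseteq> K" "e > 0"
  shows "\<exists>U. openin X U \<and> A \<subseteq> U \<and> nu U < nus A + e"
proof -
  have "Inf {nu U | U. openin X U \<and> A \<subseteq> U} < nus A + e" using assms unfolding nus_def by simp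
  from cInf_lessD[OF nus_set_ne[OF assms(1)] this] show ?thesis by blast
qed

lemma nu_approx:
  assumes "e > 0"
  shows "\<exists>h. adm U h \<and> nu U - e < \<phi> h"
proof -
  have "nu U - e < Sup {\<phi> h | h. adm U h}" using assms unfolding nu_def by simp
  from less_cSupD[OF _ this] show ?thesis using adm0 by blast
qed

lemma nus_csub:
  assumes A: "\<And>i. A i \<subseteq> K" and s: "summable (\<lambda>i. nus (A i))"
  shows "nus (\<Union>i. A i) \<le> (\<Sum>i. nus (A i))"
proof (rule field_le_epsilon)
  fix e :: real assume e: "0 < e"
  have "\<exists>U. openin X U \<and> A i \<subseteq> U \<and> nu U < nus (A i) + e * (1/2)^Suc i" for i
    using e by (intro nus_approx A) simp
  then obtain U where U: "\<And>i. openin X (U i)" "\<And>i. A i \<subseteq> U i"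
    "\<And>i. nu (U i) < nus (A i) + e * (1/2)^Suc i" by metis
  have g: "summable (\<lambda>i. e * (1/2::real)^Suc i)" "(\<Sum>i. e * (1/2::real)^Suc i) = e"
    using power_half_series sums_mult[OF power_half_series, of e] by (auto simp: sums_iff)
  have s2: "summable (\<lambda>i. nus (A i) + e * (1/2)^Suc i)" using s g(1) by (rule summable_add)
  have sU: "summable (\<lambda>i. nu (U i))"
  proof (rule summable_comparison_test[OF _ s2])
    show "\<exists>N. \<forall>n\<ge>N. norm (nu (U n)) \<le> nus (A n) + e * (1/2)^Suc n"
      using U(3) nu_ge0 by (intro exI[of _ 0]) (auto intro: less_imp_le)
  qed
  have "nus (\<Union>i. A i) \<le> nu (\<Union>i. U i)"
    using U by (intro nus_le) auto
  also have "\<dots> \<le> (\<Sum>i. nu (U i))" by (rule nu_csub[OF U(1) sU])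
  also have "\<dots> \<le> (\<Sum>i. nus (A i) + e * (1/2)^Suc i)"
    by (rule suminf_le[OF _ sU s2]) (use U(3) less_imp_le in auto)
  also have "\<dots> = (\<Sum>i. nus (A i)) + e" using suminf_add[OF s g(1)] g(2) by simp
  finally show "nus (\<Union>i. A i) \<le> (\<Sum>i. nus (A i)) + e" .
qed

definition om :: "'b set \<Rightarrow> ennreal" where
  "om A = ennreal (nus A)"

lemma om_oms: "outer_measure_space (Pow K) om"
  unfolding outer_measure_space_def
proof (intro conjI)
  show "positive (Pow K) om"
    unfolding positive_def om_def using nus_open[of "{}"] nu_empty by simp
  show "increasing (Pow K) om"
    unfolding increasing_def om_def by (auto intro!: ennreal_leI nus_mono)
  show "countably_subadditive (Pow K) om"
    unfolding countably_subadditive_def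
  proof (intro allI impI)
    fix A :: "nat \<Rightarrow> 'b set" assume A: "range A \<subseteq> Pow K"
    then have AK: "\<And>i. A i \<subseteq> K" by auto
    show "om (\<Union>i. A i) \<le> (\<Sum>i. om (A i))"
    proof (cases "summable (\<lambda>i. nus (A i))")
      case True
      then have "(\<Sum>i. om (A i)) = ennreal (\<Sum>i. nus (A i))"
        unfolding om_def using nus_ge0[OF AK] by (intro suminf_ennreal2) auto
      then show ?thesis unfolding om_def using nus_csub[OF AK True] by (simp add: ennreal_leI)
    next
      case False
      then have "(\<Sum>i. om (A i)) = top"
        unfolding om_def using nus_ge0[OF AK] by (intro summable_iff_suminf_neq_top) auto
      then show ?thesis by simp
    qed
  qed
qed

lemma open_lambda:
  assumes U: "openin X U"
  shows "U \<in> lambda_system K (Pow K) om"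
proof -
  have UK: "U \<subseteq> K" using U openin_subset by blast
  have eq: "nus (U \<inter> A) + nus ((K - U) \<inter> A) = nus A" if AK: "A \<subseteq> K" for A
  proof (rule antisym)
    show "nus (U \<inter> A) + nus ((K - U) \<inter> A) \<le> nus A"
    proof (rule field_le_epsilon)
      fix e0 :: real assume e0: "0 < e0"
      define e where "e = e0 / 4"
      have e: "0 < e" using e0 e_def by simp
      obtain V where V: "openin X V" "A \<subseteq> V" "nu V < nus A + e" using nus_approx[OF AK e] by blast
      obtain h where h: "adm (V \<inter> U) h" "nu (V \<inter> U) - e < \<phi> h" using nu_approx[OF e] by blast
      have hC: "CC h" and h01: "\<And>x. x \<in> K \<Longrightarrow> 0 \<le> h x \<and> h x \<le> 1"
        and hz: "\<And>x. x \<in> K - (V \<inter> U) \<Longrightarrow> h x = 0" using h(1) unfolding adm_def by auto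
      define h' where "h' = (\<lambda>x. max (h x - e) 0)"
      have h'C: "CC h'" unfolding h'_def using hC by (intro continuous_intros)
      define C where "C = {x \<in> K. h x \<in> {e..}}"
      have Cc: "closedin X C" unfolding C_def
        by (rule closedin_continuous_map_preimage[OF hC]) simp
      define V' where "V' = V - C"
      have V'o: "openin X V'" unfolding V'_def using V(1) Cc by (rule openin_diff)
      obtain k where k: "adm V' k" "nu V' - e < \<phi> k" using nu_approx[OF e] by blast
      have kC: "CC k" and k01: "\<And>x. x \<in> K \<Longrightarrow> 0 \<le> k x \<and> k x \<le> 1"
        and kz: "\<And>x. x \<in> K - V' \<Longrightarrow> k x = 0" using k(1) unfolding adm_def by auto
      have sadm: "adm V (\<lambda>x. h' x + k x)"
        unfolding adm_def
      proof (intro conjI ballI)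
        show "CC (\<lambda>x. h' x + k x)" using h'C kC by (intro continuous_intros)
      next
        fix x assume x: "x \<in> K"
        show "0 \<le> h' x + k x" using k01[OF x] unfolding h'_def by simp
        show "h' x + k x \<le> 1"
        proof (cases "h x \<ge> e")
          case True
          then have "x \<in> C" using x C_def by simp
          then have "k x = 0" using kz x V'_def by blast
          then show ?thesis using h01[OF x] e unfolding h'_def by simp
        next
          case False
          then have "h' x = 0" unfolding h'_def by simp
          then show ?thesis using k01[OF x] by simp
        qed
      next
        fix x assume x: "x \<in> K - V"
        then have "h x = 0" using hz by blast
        then have "h' x = 0" using e unfolding h'_def by simp
        moreover have "k x = 0" using kz x V'_def by blast
        ultimately show "h' x + k x = 0" by simp
      qed
      have "\<phi> h \<le> \<phi> (\<lambda>y. h' y + e)"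
        using hC h'C by (intro phi_mono continuous_intros) (auto simp: h'_def)
      also have "\<dots> = \<phi> h' + e"
        using lin_add[OF h'C, of "\<lambda>_. e"] phi_const by simp
      finally have hh: "\<phi> h \<le> \<phi> h' + e" .
      have "\<phi> h' + \<phi> k \<le> nu V" using nu_upper[OF sadm] lin_add[OF h'C kC] by simp
      have s1: "nus (U \<inter> A) \<le> nu (V \<inter> U)"
        using V U by (intro nus_le openin_Int) auto
      have "(K - U) \<inter> A \<subseteq> V'"
      proof
        fix x assume x: "x \<in> (K - U) \<inter> A"
        then have "h x = 0" using hz by blast
        then have "x \<notin> C" using C_def e by auto
        then show "x \<in> V'" using x V(2) V'_def by blast
      qed
      then have s2: "nus ((K - U) \<inter> A) \<le> nu V'" using V'o by (intro nus_le)
      have "\<phi> h' + \<phi> k \<le> nu V" using nu_upper[OF sadm] lin_add[OF h'C kC] by simp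
      then show "nus (U \<inter> A) + nus ((K - U) \<inter> A) \<le> nus A + e0"
        using s1 s2 hh h(2) k(2) V(3) e_def by linarith
    qed
  next
    show "nus A \<le> nus (U \<inter> A) + nus ((K - U) \<inter> A)"
    proof (rule field_le_epsilon)
      fix e :: real assume e: "0 < e"
      have e2: "e/2 > 0" using e by simp
      obtain V1 where V1: "openin X V1" "U \<inter> A \<subseteq> V1" "nu V1 < nus (U \<inter> A) + e/2"
        using nus_approx[OF _ e2, of "U \<inter> A"] UK by blast
      obtain V2 where V2: "openin X V2" "(K - U) \<inter> A \<subseteq> V2" "nu V2 < nus ((K - U) \<inter> A) + e/2"
        using nus_approx[OF _ e2, of "(K - U) \<inter> A"] by blast
      have "A \<subseteq> V1 \<union> V2" using V1(2) V2(2) AK by blast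
      then have "nus A \<le> nu (V1 \<union> V2)" using V1(1) V2(1) by (intro nus_le) auto
      also have "\<dots> \<le> nu V1 + nu V2" by (rule nu_union2[OF V1(1) V2(1)])
      finally show "nus A \<le> nus (U \<inter> A) + nus ((K - U) \<inter> A) + e" using V1(3) V2(3) by simp
    qed
  qed
  show ?thesis
    unfolding lambda_system_def
  proof (intro CollectI conjI ballI)
    show "U \<in> Pow K" using UK by simp
  next
    fix A assume "A \<in> Pow K"
    then have AK: "A \<subseteq> K" by simp
    have "om (U \<inter> A) + om ((K - U) \<inter> A) = ennreal (nus (U \<inter> A) + nus ((K - U) \<inter> A))"
    proof -
      have "0 \<le> nus (U \<inter> A)" "0 \<le> nus ((K - U) \<inter> A)" using AK by (intro nus_ge0; blast)+
      then show ?thesis unfolding om_def by (simp add: ennreal_plus)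
    qed
    then show "om (U \<inter> A) + om ((K - U) \<inter> A) = om A" using eq[OF AK] om_def by simp
  qed
qed

end


context riesz_setting
begin

definition OPS where "OPS = {U. openin X U}"
definition mu where "mu = measure_of K OPS om"

lemma OPS_Pow: "OPS \<subseteq> Pow K"
proof
  fix U assume "U \<in> OPS"
  then have "openin X U" unfolding OPS_def by simp
  then show "U \<in> Pow K" using openin_subset by simp
qed

lemma sets_mu: "sets mu = sigma_sets K OPS"
  unfolding mu_def by (rule sets_measure_of[OF OPS_Pow])

lemma space_mu: "space mu = K"
  unfolding mu_def by (rule space_measure_of[OF OPS_Pow])

lemma sets_mu_borel: "sets mu = sets (borel_of X)"
proof -
  have "{U. openin X U} \<subseteq> Pow K" using OPS_Pow OPS_def by simp
  then show ?thesis unfolding sets_mu borel_of_def OPS_def by (simp add: sets_measure_of)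
qed

lemma ms_lambda: "measure_space K (lambda_system K (Pow K) om) om"
  using sigma_algebra.caratheodory_lemma[OF sigma_algebra_Pow om_oms] by simp

lemma ms_B: "measure_space K (sigma_sets K OPS) om"
proof -
  have sa: "sigma_algebra K (lambda_system K (Pow K) om)"
    using ms_lambda unfolding measure_space_def by blast
  have "OPS \<subseteq> lambda_system K (Pow K) om" using open_lambda OPS_def by blast
  then have "sigma_sets K OPS \<subseteq> lambda_system K (Pow K) om"
    by (rule sigma_algebra.sigma_sets_subset[OF sa])
  then show ?thesis
    using measure_down[OF ms_lambda sigma_algebra_sigma_sets[OF OPS_Pow]] by blast
qed

lemma emeasure_mu: "A \<in> sets mu \<Longrightarrow> emeasure mu A = ennreal (nus A)"
proof -
  assume A: "A \<in> sets mu"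
  have "emeasure mu A = om A"
  proof (rule emeasure_measure_of[OF mu_def OPS_Pow])
    show "positive (sets mu) om" "countably_additive (sets mu) om"
      using ms_B unfolding measure_space_def sets_mu by auto
  qed (rule A)
  then show ?thesis by (simp add: om_def)
qed

lemma sets_mu_sub: "A \<in> sets mu \<Longrightarrow> A \<subseteq> K"
  using sets.sets_into_space space_mu by blast

lemma open_in_mu: "openin X U \<Longrightarrow> U \<in> sets mu"
  unfolding sets_mu OPS_def by (rule sigma_sets.Basic) simp

lemma measure_mu: "A \<in> sets mu \<Longrightarrow> measure mu A = nus A"
  using emeasure_mu nus_ge0 sets_mu_sub by (simp add: measure_def)

lemma prob_mu: "prob_space mu"
proof (rule prob_spaceI)
  have "K \<in> sets mu" using open_in_mu by simp
  then show "emeasure mu (space mu) = 1"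
    using emeasure_mu space_mu nus_open[of K] nu_K by simp
qed

lemma outer_reg:
  assumes A: "A \<in> sets mu"
  shows "emeasure mu A = (INF U\<in>{U. openin X U \<and> A \<subseteq> U}. emeasure mu U)"
proof (rule antisym)
  have AK: "A \<subseteq> K" using sets_mu_sub[OF A] .
  show "emeasure mu A \<le> (INF U\<in>{U. openin X U \<and> A \<subseteq> U}. emeasure mu U)"
  proof (rule INF_greatest)
    fix U assume "U \<in> {U. openin X U \<and> A \<subseteq> U}"
    then have U: "openin X U" "A \<subseteq> U" by auto
    show "emeasure mu A \<le> emeasure mu U"
      using emeasure_mu[OF A] emeasure_mu[OF open_in_mu[OF U(1)]] nus_le[OF U] nus_open[OF U(1)]
      by (simp add: ennreal_leI)
  qed
  show "(INF U\<in>{U. openin X U \<and> A \<subseteq> U}. emeasure mu U) \<le> emeasure mu A"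
  proof (rule ennreal_le_epsilon)
    fix e :: real assume e: "0 < e"
    obtain U where U: "openin X U" "A \<subseteq> U" "nu U < nus A + e" using nus_approx[OF AK e] by blast
    have "(INF U\<in>{U. openin X U \<and> A \<subseteq> U}. emeasure mu U) \<le> emeasure mu U"
      using U by (intro INF_lower) auto
    also have "\<dots> = ennreal (nu U)" using emeasure_mu[OF open_in_mu[OF U(1)]] nus_open[OF U(1)] by simp
    also have "\<dots> \<le> ennreal (nus A + e)" using U(3) by (simp add: ennreal_leI)
    also have "\<dots> = emeasure mu A + ennreal e"
      using emeasure_mu[OF A] nus_ge0[OF AK] e by (simp add: ennreal_plus)
    finally show "(INF U\<in>{U. openin X U \<and> A \<subseteq> U}. emeasure mu U) \<le> emeasure mu A + ennreal e" .
  qed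
qed

lemma compact_in_mu: "compactin X C \<Longrightarrow> C \<in> sets mu"
proof -
  assume C: "compactin X C"
  have cl: "closedin X C" using compactin_imp_closedin[OF hd C] .
  then have "openin X (K - C)" by (simp add: openin_diff)
  then have "K - (K - C) \<in> sets mu" using open_in_mu sets.compl_sets space_mu by metis
  moreover have "K - (K - C) = C" using closedin_subset[OF cl] by blast
  ultimately show ?thesis by simp
qed

lemma inner_reg:
  assumes A: "A \<in> sets mu"
  shows "emeasure mu A = (SUP C\<in>{C. compactin X C \<and> C \<subseteq> A}. emeasure mu C)"
proof (rule antisym)
  interpret P: prob_space mu by (rule prob_mu)
  have AK: "A \<subseteq> K" using sets_mu_sub[OF A] .
  show "(SUP C\<in>{C. compactin X C \<and> C \<subseteq> A}. emeasure mu C) \<le> emeasure mu A"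
    using compact_in_mu A by (intro SUP_least emeasure_mono) auto
  show "emeasure mu A \<le> (SUP C\<in>{C. compactin X C \<and> C \<subseteq> A}. emeasure mu C)"
  proof (rule ennreal_le_epsilon)
    fix e :: real assume e: "0 < e"
    have KA: "K - A \<in> sets mu" using sets.compl_sets[OF A] space_mu by simp
    obtain U where U: "openin X U" "K - A \<subseteq> U" "nu U < nus (K - A) + e"
      using nus_approx[OF _ e, of "K - A"] by blast
    define C where "C = K - U"
    have Ccl: "closedin X C" unfolding C_def using U(1) by (simp add: closedin_diff)
    have Cc: "compactin X C" using closedin_compact_space[OF cpt Ccl] .
    have CA: "C \<subseteq> A" using U(2) C_def by blast
    have Um: "U \<in> sets mu" using open_in_mu[OF U(1)] .
    have "measure mu C = 1 - measure mu U"
      using P.prob_compl[OF Um] space_mu C_def by simp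
    moreover have "measure mu (K - A) = 1 - measure mu A"
      using P.prob_compl[OF A] space_mu by simp
    moreover have "measure mu U = nu U" using measure_mu[OF Um] nus_open[OF U(1)] by simp
    moreover have "measure mu (K - A) = nus (K - A)" using measure_mu[OF KA] .
    ultimately have le: "measure mu A \<le> measure mu C + e" using U(3) by simp
    have "emeasure mu A = ennreal (measure mu A)" using P.emeasure_eq_measure by blast
    also have "\<dots> \<le> ennreal (measure mu C + e)" using le by (simp add: ennreal_leI)
    also have "\<dots> = emeasure mu C + ennreal e"
      using P.emeasure_eq_measure e by (simp add: ennreal_plus)
    also have "emeasure mu C \<le> (SUP C\<in>{C. compactin X C \<and> C \<subseteq> A}. emeasure mu C)"
      using Cc CA by (intro SUP_upper) auto
    finally show "emeasure mu A \<le> (SUP C\<in>{C. compactin X C \<and> C \<subseteq> A}. emeasure mu C) + ennreal e"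
      by (simp add: add_right_mono)
  qed
qed

lemma regular_mu: "regular_measure_on X mu"
  unfolding regular_measure_on_def using inner_reg outer_reg by blast

end


lemma layer_sum:
  fixes a d :: real
  assumes d: "0 \<le> d"
  shows "(\<Sum>i<n. min (max (a - real i * d) 0) d) = min (max a 0) (real n * d)"
proof (induction n)
  case 0 then show ?case by simp
next
  case (Suc n)
  have "min (max a 0) (real n * d) + min (max (a - real n * d) 0) d = min (max a 0) (real (Suc n) * d)"
  proof -
    have nd: "0 \<le> real n * d" using d by simp
    have e: "real (Suc n) * d = real n * d + d" by (simp add: algebra_simps)
    have g: "min (max a 0) c + min (max (a - c) 0) d = min (max a 0) (c + d)" if "0 \<le> c" for c
      using that d by (auto simp: min_def max_def)
    show ?thesis unfolding e by (rule g[OF nd])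
  qed
  then show ?case using Suc by simp
qed

context riesz_setting
begin

lemma CC_meas: "CC h \<Longrightarrow> h \<in> borel_measurable mu"
proof (rule borel_measurableI)
  fix S :: "real set" assume S: "open S" and h: "CC h"
  have "openin X {x \<in> K. h x \<in> S}"
    using S by (intro openin_continuous_map_preimage[OF h]) auto
  moreover have "h -` S \<inter> space mu = {x \<in> K. h x \<in> S}" using space_mu by auto
  ultimately show "h -` S \<inter> space mu \<in> sets mu" using open_in_mu by simp
qed

lemma CC_bounded: "CC h \<Longrightarrow> \<exists>B. \<forall>x\<in>K. \<bar>h x\<bar> \<le> B"
proof -
  assume h: "CC h"
  have "compactin euclideanreal (h ` K)"
    using image_compactin[OF _ h] cpt compact_space_def by blast
  then have "compact (h ` K)" by simp
  then have "bounded (h ` K)" by (rule compact_imp_bounded)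
  then show ?thesis unfolding bounded_iff by auto
qed

lemma CC_integrable: "CC h \<Longrightarrow> integrable mu h"
proof -
  assume h: "CC h"
  interpret P: prob_space mu by (rule prob_mu)
  obtain B where B: "\<forall>x\<in>K. \<bar>h x\<bar> \<le> B" using CC_bounded[OF h] by blast
  show ?thesis
    by (rule P.integrable_const_bound[where B=B]) (use B space_mu CC_meas[OF h] in auto)
qed

lemma phi_le_integral:
  assumes h: "CC h" and nn: "\<And>x. x \<in> K \<Longrightarrow> 0 \<le> h x"
  shows "\<phi> h \<le> (\<integral>x. h x \<partial>mu)"
proof -
  interpret P: prob_space mu by (rule prob_mu)
  obtain B where B: "\<forall>x\<in>K. \<bar>h x\<bar> \<le> B" using CC_bounded[OF h] by blast
  define M where "M = max B 0 + 1"
  have M: "M > 0" "\<And>x. x \<in> K \<Longrightarrow> h x \<le> M" using B M_def by auto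
  have main: "\<phi> h \<le> M / real (Suc m) + (\<integral>x. h x \<partial>mu)" for m
  proof -
    define n where "n = Suc m"
    define d where "d = M / real n"
    have d: "d > 0" using M n_def d_def by simp
    have nd: "real n * d = M" using n_def d_def by simp
    define l where "l i = (\<lambda>x. min (max (h x - real i * d) 0) d)" for i
    define U where "U i = {x \<in> K. h x \<in> {real i * d<..}}" for i
    have lC: "CC (l i)" for i unfolding l_def using h by (intro continuous_intros)
    have Uo: "openin X (U i)" for i unfolding U_def by (rule openin_continuous_map_preimage[OF h]) simp
    have hsum: "h x = (\<Sum>i<n. l i x)" if x: "x \<in> K" for x
      using layer_sum[of d "h x" n] d nd nn[OF x] M(2)[OF x] unfolding l_def by simp
    have phil: "\<phi> (l i) \<le> d * nu (U i)" for i
    proof -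
      have adm: "adm (U i) (\<lambda>x. (1/d) * l i x)"
        unfolding adm_def
      proof (intro conjI ballI)
        show "CC (\<lambda>x. (1/d) * l i x)" using lC by (intro continuous_intros)
      next
        fix x assume "x \<in> K"
        show "0 \<le> (1/d) * l i x" using d unfolding l_def by simp
        show "(1/d) * l i x \<le> 1" using d unfolding l_def by (simp add: field_simps)
      next
        fix x assume x: "x \<in> K - U i"
        then have "h x \<le> real i * d" using U_def by auto
        then show "(1/d) * l i x = 0" unfolding l_def using d by simp
      qed
      have "l i = (\<lambda>x. d * ((1/d) * l i x))" using d by auto
      then have "\<phi> (l i) = d * \<phi> (\<lambda>x. (1/d) * l i x)"
        using lin_sc[of "\<lambda>x. (1/d) * l i x" d] lC by (metis continuous_map_real_mult_left)
      also have "\<dots> \<le> d * nu (U i)" using nu_upper[OF adm] d by simp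
      finally show ?thesis .
    qed
    have lint: "d * nu (U (Suc i)) \<le> (\<integral>x. l i x \<partial>mu)" for i
    proof -
      have Um: "U (Suc i) \<in> sets mu" using open_in_mu[OF Uo] .
      have "d * nu (U (Suc i)) = (\<integral>x. d * indicator (U (Suc i)) x \<partial>mu)"
        using measure_mu[OF Um] nus_open[OF Uo] sets_mu_sub[OF Um] space_mu
        by (simp add: Int_absorb2)
      also have "\<dots> \<le> (\<integral>x. l i x \<partial>mu)"
      proof (rule integral_mono)
        show "integrable mu (\<lambda>x. d * indicator (U (Suc i)) x)"
          using Um by (intro integrable_mult_right integrable_real_indicator) (auto simp: less_top[symmetric] P.emeasure_finite)
        show "integrable mu (l i)" by (rule CC_integrable[OF lC])
      next
        fix x assume x: "x \<in> space mu"
        show "d * indicator (U (Suc i)) x \<le> l i x"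
        proof (cases "x \<in> U (Suc i)")
          case True
          then have "h x > real (Suc i) * d" using U_def by auto
          then have "h x - real i * d > d" by (simp add: algebra_simps)
          then show ?thesis using True d unfolding l_def by simp
        next
          case False
          then show ?thesis using d unfolding l_def by simp
        qed
      qed
      finally show ?thesis .
    qed
    have lnn: "0 \<le> (\<integral>x. l i x \<partial>mu)" for i
      using d unfolding l_def by (intro integral_nonneg_AE) auto
    have "\<phi> h = \<phi> (\<lambda>x. \<Sum>i<n. l i x)"
      using h lC hsum by (intro phi_cong continuous_intros) auto
    also have "\<dots> = (\<Sum>i<n. \<phi> (l i))" using phi_sum[of "{..<n}" l] lC by simp
    also have "\<dots> \<le> (\<Sum>i<n. d * nu (U i))" using phil by (intro sum_mono) auto
    also have "\<dots> = d * nu (U 0) + (\<Sum>i<m. d * nu (U (Suc i)))"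
      unfolding n_def by (subst sum.lessThan_Suc_shift) simp
    also have "\<dots> \<le> d + (\<Sum>i<m. (\<integral>x. l i x \<partial>mu))"
      using nu_le1[of "U 0"] d lint by (intro add_mono sum_mono) auto
    also have "(\<Sum>i<m. (\<integral>x. l i x \<partial>mu)) \<le> (\<Sum>i<n. (\<integral>x. l i x \<partial>mu))"
      unfolding n_def using lnn by simp
    also have "(\<Sum>i<n. (\<integral>x. l i x \<partial>mu)) = (\<integral>x. (\<Sum>i<n. l i x) \<partial>mu)"
      using CC_integrable[OF lC] by (subst Bochner_Integration.integral_sum) auto
    also have "\<dots> = (\<integral>x. h x \<partial>mu)"
      using hsum space_mu by (intro Bochner_Integration.integral_cong) auto
    finally show ?thesis using d_def n_def by simp
  qed
  show ?thesis
  proof (rule ccontr)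
    assume "\<not> ?thesis"
    then have g: "\<phi> h - (\<integral>x. h x \<partial>mu) > 0" by simp
    obtain m where m: "M / (\<phi> h - (\<integral>x. h x \<partial>mu)) < real m" using reals_Archimedean2 by blast
    have "M < (\<phi> h - (\<integral>x. h x \<partial>mu)) * real m" using m g by (simp add: field_simps)
    also have "\<dots> \<le> (\<phi> h - (\<integral>x. h x \<partial>mu)) * real (Suc m)" using g by simp
    finally have "M / real (Suc m) < \<phi> h - (\<integral>x. h x \<partial>mu)" by (simp add: field_simps)
    then show False using main[of m] by simp
  qed
qed

theorem riesz_exists:
  "\<exists>\<mu>. prob_space \<mu> \<and> sets \<mu> = sets (borel_of X) \<and> space \<mu> = K \<and> regular_measure_on X \<mu> \<and>
     (\<forall>h. CC h \<and> (\<forall>x\<in>K. 0 \<le> h x) \<longrightarrow> \<phi> h \<le> (\<integral>x. h x \<partial>\<mu>))"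
  using prob_mu sets_mu_borel space_mu regular_mu phi_le_integral by blast

end


abbreviation PT :: "(('a::real_normed_vector \<Rightarrow>\<^sub>L real) \<Rightarrow> real) topology" where
  "PT \<equiv> product_topology (\<lambda>_. euclideanreal) UNIV"

lemma topspace_ws: "topspace (weak_star_bidual_ball :: (('a::real_normed_vector \<Rightarrow>\<^sub>L real) \<Rightarrow>\<^sub>L real) topology) = cball 0 1"
  unfolding weak_star_bidual_ball_def topspace_pullback_topology by simp

lemma eval_cont: "continuous_map (weak_star_bidual_ball :: (('a::real_normed_vector \<Rightarrow>\<^sub>L real) \<Rightarrow>\<^sub>L real) topology)
   euclideanreal (\<lambda>z. blinfun_apply z y)"
proof -
  have "continuous_map (weak_star_bidual_ball :: (('a \<Rightarrow>\<^sub>L real) \<Rightarrow>\<^sub>L real) topology) euclideanreal ((\<lambda>g. g y) \<circ> blinfun_apply)"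
    unfolding weak_star_bidual_ball_def
    by (rule continuous_map_pullback) (rule continuous_map_product_projection, simp)
  then show ?thesis by (simp add: o_def)
qed

lemma hausdorff_ws: "Hausdorff_space (weak_star_bidual_ball :: (('a::real_normed_vector \<Rightarrow>\<^sub>L real) \<Rightarrow>\<^sub>L real) topology)"
proof (rule Hausdorff_space_injective_preimage)
  show "Hausdorff_space (PT :: (('a \<Rightarrow>\<^sub>L real) \<Rightarrow> real) topology)"
    by (simp add: Hausdorff_space_product_topology)
  have "continuous_map (weak_star_bidual_ball :: (('a \<Rightarrow>\<^sub>L real) \<Rightarrow>\<^sub>L real) topology) PT (id \<circ> blinfun_apply)"
    unfolding weak_star_bidual_ball_def by (rule continuous_map_pullback) simp
  then show "continuous_map (weak_star_bidual_ball :: (('a \<Rightarrow>\<^sub>L real) \<Rightarrow>\<^sub>L real) topology) PT blinfun_apply"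
    by simp
  show "inj_on blinfun_apply (topspace (weak_star_bidual_ball :: (('a \<Rightarrow>\<^sub>L real) \<Rightarrow>\<^sub>L real) topology))"
    by (simp add: inj_on_def blinfun_apply_inject)
qed

definition FF :: "(('a::real_normed_vector \<Rightarrow>\<^sub>L real) \<Rightarrow> real) set" where
  "FF = (PiE UNIV (\<lambda>y. {- norm y .. norm y})) \<inter>
        ((\<Inter>p\<in>UNIV. {g. g (fst p + snd p) - g (fst p) - g (snd p) \<in> {0}}) \<inter>
         (\<Inter>q\<in>UNIV. {g. g (fst q *\<^sub>R snd q) - fst q * g (snd q) \<in> {0}}))"

lemma FF_compact: "compactin PT (FF :: (('a::real_normed_vector \<Rightarrow>\<^sub>L real) \<Rightarrow> real) set)"
proof -
  have c1: "compactin (PT :: (('a \<Rightarrow>\<^sub>L real) \<Rightarrow> real) topology) (PiE UNIV (\<lambda>y. {- norm y .. norm y}))"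
    by (simp add: compactin_PiE)
  have cA: "closedin (PT :: (('a \<Rightarrow>\<^sub>L real) \<Rightarrow> real) topology) {g. g (fst p + snd p) - g (fst p) - g (snd p) \<in> {0}}" for p
  proof -
    have cm: "continuous_map (PT :: (('a \<Rightarrow>\<^sub>L real) \<Rightarrow> real) topology) euclideanreal (\<lambda>g. g (fst p + snd p) - g (fst p) - g (snd p))"
      by (intro continuous_intros) auto
    have "closedin (PT :: (('a \<Rightarrow>\<^sub>L real) \<Rightarrow> real) topology) {g \<in> topspace PT. g (fst p + snd p) - g (fst p) - g (snd p) \<in> {0}}"
      by (rule closedin_continuous_map_preimage[OF cm]) simp
    then show ?thesis by simp
  qed
  have cB: "closedin (PT :: (('a \<Rightarrow>\<^sub>L real) \<Rightarrow> real) topology) {g. g (fst q *\<^sub>R snd q) - fst q * g (snd q) \<in> {0}}" for q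
  proof -
    have cm: "continuous_map (PT :: (('a \<Rightarrow>\<^sub>L real) \<Rightarrow> real) topology) euclideanreal (\<lambda>g. g (fst q *\<^sub>R snd q) - fst q * g (snd q))"
      by (intro continuous_intros) auto
    have "closedin (PT :: (('a \<Rightarrow>\<^sub>L real) \<Rightarrow> real) topology) {g \<in> topspace PT. g (fst q *\<^sub>R snd q) - fst q * g (snd q) \<in> {0}}"
      by (rule closedin_continuous_map_preimage[OF cm]) simp
    then show ?thesis by simp
  qed
  have "closedin (PT :: (('a \<Rightarrow>\<^sub>L real) \<Rightarrow> real) topology)
        ((\<Inter>p\<in>UNIV. {g. g (fst p + snd p) - g (fst p) - g (snd p) \<in> {0}}) \<inter>
         (\<Inter>q\<in>UNIV. {g. g (fst q *\<^sub>R snd q) - fst q * g (snd q) \<in> {0}}))"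
    using cA cB by (intro closedin_Int closedin_Inter) auto
  from closed_Int_compactin[OF this c1] show ?thesis unfolding FF_def by (simp only: Int_commute)
qed

lemma FF_iff: "g \<in> (FF :: (('a::real_normed_vector \<Rightarrow>\<^sub>L real) \<Rightarrow> real) set) \<longleftrightarrow>
   (\<forall>y. \<bar>g y\<bar> \<le> norm y) \<and> (\<forall>x y. g (x + y) = g x + g y) \<and> (\<forall>c x. g (c *\<^sub>R x) = c * g x)"
proof
  assume g: "g \<in> FF"
  have g': "g \<in> (PiE UNIV (\<lambda>y. {- norm y .. norm y})) \<inter>
        ((\<Inter>p\<in>UNIV. {g. g (fst p + snd p) - g (fst p) - g (snd p) \<in> {0}}) \<inter>
         (\<Inter>q\<in>UNIV. {g. g (fst q *\<^sub>R snd q) - fst q * g (snd q) \<in> {0}}))"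
    using g unfolding FF_def .
  have a: "g \<in> PiE UNIV (\<lambda>y. {- norm y .. norm y})" using g' by (rule IntD1)
  have b: "g (fst p + snd p) - g (fst p) - g (snd p) \<in> {0}" for p
    using IntD1[OF IntD2[OF g']] by simp
  have c: "g (fst q *\<^sub>R snd q) - fst q * g (snd q) \<in> {0}" for q
    using IntD2[OF IntD2[OF g']] by simp
  show "(\<forall>y. \<bar>g y\<bar> \<le> norm y) \<and> (\<forall>x y. g (x + y) = g x + g y) \<and> (\<forall>c x. g (c *\<^sub>R x) = c * g x)"
  proof (intro conjI allI)
    fix y have "g y \<in> {- norm y .. norm y}" using a by (auto simp: PiE_def Pi_def)
    then show "\<bar>g y\<bar> \<le> norm y" by (simp add: abs_le_iff)
  next
    fix x y show "g (x + y) = g x + g y" using b[of "(x,y)"] by simp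
  next
    fix c x show "g (c *\<^sub>R x) = c * g x" using c[of "(c,x)"] by simp
  qed
next
  assume g: "(\<forall>y. \<bar>g y\<bar> \<le> norm y) \<and> (\<forall>x y. g (x + y) = g x + g y) \<and> (\<forall>c x. g (c *\<^sub>R x) = c * g x)"
  have "g \<in> PiE UNIV (\<lambda>y. {- norm y .. norm y})"
  proof -
    have "- norm y \<le> g y \<and> g y \<le> norm y" for y
    proof -
      have "\<bar>g y\<bar> \<le> norm y" using g by blast
      then show ?thesis by (simp add: abs_le_iff)
    qed
    then show ?thesis by (auto simp: PiE_def Pi_def)
  qed
  moreover have "g \<in> (\<Inter>p\<in>UNIV. {g. g (fst p + snd p) - g (fst p) - g (snd p) \<in> {0}})" using g by simp
  moreover have "g \<in> (\<Inter>q\<in>UNIV. {g. g (fst q *\<^sub>R snd q) - fst q * g (snd q) \<in> {0}})" using g by simp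
  ultimately show "g \<in> FF" unfolding FF_def by (intro IntI)
qed

lemma FF_bl: "g \<in> (FF :: (('a::real_normed_vector \<Rightarrow>\<^sub>L real) \<Rightarrow> real) set) \<Longrightarrow> bounded_linear g"
proof -
  assume "g \<in> FF"
  then have g: "\<And>y. \<bar>g y\<bar> \<le> norm y" "\<And>x y. g (x + y) = g x + g y" "\<And>c x. g (c *\<^sub>R x) = c * g x"
    unfolding FF_iff by auto
  show ?thesis by (rule bounded_linear_intro[where K=1]) (use g in auto)
qed

lemma FF_image: "Blinfun ` (FF :: (('a::real_normed_vector \<Rightarrow>\<^sub>L real) \<Rightarrow> real) set) = cball 0 1"
proof
  show "Blinfun ` (FF :: (('a \<Rightarrow>\<^sub>L real) \<Rightarrow> real) set) \<subseteq> cball 0 1"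
  proof
    fix z assume "z \<in> Blinfun ` (FF :: (('a \<Rightarrow>\<^sub>L real) \<Rightarrow> real) set)"
    then obtain g where g: "g \<in> FF" "z = Blinfun g" by blast
    have "blinfun_apply z = g" using g FF_bl bounded_linear_Blinfun_apply by blast
    moreover have "\<And>y. \<bar>g y\<bar> \<le> norm y" using g(1) unfolding FF_iff by blast
    ultimately have zb: "\<And>y. norm (blinfun_apply z y) \<le> 1 * norm y" by simp
    have "norm z \<le> 1" by (rule norm_blinfun_bound[OF _ zb]) simp
    then show "z \<in> cball 0 1" by simp
  qed
  show "cball 0 1 \<subseteq> Blinfun ` (FF :: (('a \<Rightarrow>\<^sub>L real) \<Rightarrow> real) set)"
  proof
    fix z :: "('a \<Rightarrow>\<^sub>L real) \<Rightarrow>\<^sub>L real" assume z: "z \<in> cball 0 1"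
    have "blinfun_apply z \<in> FF" unfolding FF_iff
    proof (intro conjI allI)
      fix y
      have "\<bar>z y\<bar> \<le> norm z * norm y" using norm_blinfun[of z y] by simp
      also have "\<dots> \<le> norm y" using z by (simp add: mult_left_le_one_le)
      finally show "\<bar>z y\<bar> \<le> norm y" .
    next
      fix x y show "z (x + y) = z x + z y" by (simp add: blinfun.add_right)
    next
      fix c x show "z (c *\<^sub>R x) = c * z x" by (simp add: blinfun.scaleR_right)
    qed
    moreover have "Blinfun (blinfun_apply z) = z" by (rule blinfun_apply_inverse)
    ultimately show "z \<in> Blinfun ` FF" by (metis image_eqI)
  qed
qed

lemma compact_ws: "compact_space (weak_star_bidual_ball :: (('a::real_normed_vector \<Rightarrow>\<^sub>L real) \<Rightarrow>\<^sub>L real) topology)"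
proof -
  have cs: "compact_space (subtopology (PT :: (('a \<Rightarrow>\<^sub>L real) \<Rightarrow> real) topology) FF)"
    by (rule compact_space_subtopology[OF FF_compact])
  have cm: "continuous_map (subtopology (PT :: (('a \<Rightarrow>\<^sub>L real) \<Rightarrow> real) topology) FF)
     (weak_star_bidual_ball :: (('a \<Rightarrow>\<^sub>L real) \<Rightarrow>\<^sub>L real) topology) Blinfun"
    unfolding weak_star_bidual_ball_def
  proof (rule continuous_map_pullback')
    have "continuous_map (subtopology (PT :: (('a \<Rightarrow>\<^sub>L real) \<Rightarrow> real) topology) FF) PT id"
      by (simp add: continuous_map_from_subtopology)
    moreover have "id g = (blinfun_apply \<circ> Blinfun) g"
      if "g \<in> topspace (subtopology (PT :: (('a \<Rightarrow>\<^sub>L real) \<Rightarrow> real) topology) FF)" for g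
    proof -
      have "g \<in> FF" using that by simp
      then show ?thesis by (simp add: bounded_linear_Blinfun_apply[OF FF_bl])
    qed
    ultimately show "continuous_map (subtopology (PT :: (('a \<Rightarrow>\<^sub>L real) \<Rightarrow> real) topology) FF) PT (blinfun_apply \<circ> Blinfun)"
      by (rule continuous_map_eq)
    show "topspace (subtopology (PT :: (('a \<Rightarrow>\<^sub>L real) \<Rightarrow> real) topology) FF) \<subseteq> Blinfun -` cball 0 1"
      using FF_image by auto
  qed
  have "compactin (weak_star_bidual_ball :: (('a \<Rightarrow>\<^sub>L real) \<Rightarrow>\<^sub>L real) topology)
      (Blinfun ` topspace (subtopology (PT :: (('a \<Rightarrow>\<^sub>L real) \<Rightarrow> real) topology) FF))"
    using image_compactin[OF cs[unfolded compact_space_def] cm] .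
  moreover have "topspace (subtopology (PT :: (('a \<Rightarrow>\<^sub>L real) \<Rightarrow> real) topology) FF) = FF" by simp
  ultimately show ?thesis unfolding compact_space_def using FF_image topspace_ws by metis
qed

definition evb :: "'a::real_normed_vector \<Rightarrow> ('a \<Rightarrow>\<^sub>L real) \<Rightarrow>\<^sub>L real" where
  "evb x = Blinfun (\<lambda>y. blinfun_apply y x)"

lemma evb_apply: "blinfun_apply (evb x) y = blinfun_apply y x"
  unfolding evb_def by (simp add: bounded_linear_Blinfun_apply)

lemma evb_ball: "norm x \<le> 1 \<Longrightarrow> evb x \<in> cball 0 1"
proof -
  assume x: "norm x \<le> 1"
  have "norm (evb x) \<le> norm x"
  proof (rule norm_blinfun_bound)
    fix y :: "'a \<Rightarrow>\<^sub>L real"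
    show "norm (blinfun_apply (evb x) y) \<le> norm x * norm y"
      using norm_blinfun[of y x] by (simp add: evb_apply mult.commute)
  qed simp
  then show ?thesis using x by simp
qed


lemma sum_list_scale: "(\<Sum>y\<leftarrow>L. c * F y) = c * (\<Sum>y\<leftarrow>L. F y :: real)"
  by (induction L) (auto simp: algebra_simps)

lemma sum_list_div: "(\<Sum>y\<leftarrow>L. F y / c) = (\<Sum>y\<leftarrow>L. F y) / (c :: real)"
  by (induction L) (auto simp: add_divide_distrib)

locale fbl_ctx =
  fixes f :: "('a::banach \<Rightarrow>\<^sub>L real) \<Rightarrow> real"
  assumes fH: "f \<in> H0_pos"
begin

definition N where "N = fbl_norm f"

lemma f_nn: "0 \<le> f y" using fH unfolding H0_pos_def by blast

lemma f_hom: "c > 0 \<Longrightarrow> f (c *\<^sub>R y) = c * f y"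
  using fH unfolding H0_pos_def H0_def pos_homogeneous_def by blast

lemma f_bdd: "bdd_above (fbl_sums f)"
  using fH unfolding H0_pos_def H0_def by simp

lemma f0: "f 0 = 0"
  using f_hom[of 2 0] by simp

lemma adm_le_N: "fbl_admissible xs \<Longrightarrow> (\<Sum>y\<leftarrow>xs. f y) \<le> N"
proof -
  assume a: "fbl_admissible xs"
  have "(\<Sum>y\<leftarrow>xs. \<bar>f y\<bar>) \<in> fbl_sums f" unfolding fbl_sums_def using a by blast
  then have "(\<Sum>y\<leftarrow>xs. \<bar>f y\<bar>) \<le> N" unfolding N_def fbl_norm_def by (rule cSup_upper[OF _ f_bdd])
  moreover have "(\<Sum>y\<leftarrow>xs. \<bar>f y\<bar>) = (\<Sum>y\<leftarrow>xs. f y)" using f_nn by (simp add: abs_of_nonneg)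
  ultimately show ?thesis by simp
qed

lemma N_ge0: "0 \<le> N"
proof -
  have "fbl_admissible []" unfolding fbl_admissible_def by simp
  then show ?thesis using adm_le_N[of "[]"] by simp
qed

definition sumset :: "('a \<Rightarrow>\<^sub>L real) list \<Rightarrow> real set" where
  "sumset L = {(\<Sum>y\<leftarrow>L. \<bar>blinfun_apply y x\<bar>) | x. norm x \<le> 1}"

lemma sumset_bdd: "bdd_above (sumset L)"
proof -
  have "(\<Sum>y\<leftarrow>L. \<bar>blinfun_apply y x\<bar>) \<le> (\<Sum>y\<leftarrow>L. norm y)" if "norm x \<le> 1" for x
  proof (rule sum_list_mono)
    fix y :: "'a \<Rightarrow>\<^sub>L real"
    have "\<bar>y x\<bar> \<le> norm y * norm x" using norm_blinfun[of y x] by simp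
    also have "\<dots> \<le> norm y" using mult_left_le_one_le[of "norm y" "norm x"] that by (simp add: mult.commute)
    finally show "\<bar>y x\<bar> \<le> norm y" .
  qed
  then show ?thesis unfolding sumset_def bdd_above_def by blast
qed

lemma sumset_ne: "(\<Sum>y\<leftarrow>L. \<bar>blinfun_apply y 0\<bar>) \<in> sumset L"
  unfolding sumset_def by (intro CollectI exI[of _ 0]) simp

lemma sumset_0: "0 \<le> Sup (sumset L)"
proof -
  have "(\<Sum>y\<leftarrow>L. \<bar>blinfun_apply y 0\<bar>) = 0" by (induction L) (auto simp: blinfun.zero_right)
  then show ?thesis using cSup_upper[OF sumset_ne sumset_bdd] by simp
qed

lemma fsum_le: "(\<Sum>y\<leftarrow>L. f y) \<le> N * Sup (sumset L)"
proof (rule field_le_epsilon)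
  fix e :: real assume e: "0 < e"
  define s where "s = Sup (sumset L)"
  define t where "t = s + e / (N + 1)"
  have s0: "0 \<le> s" using sumset_0 s_def by simp
  have t: "t > 0" using s0 e N_ge0 t_def by (simp add: add_nonneg_pos)
  have "fbl_admissible (map (\<lambda>y. (1/t) *\<^sub>R y) L)"
    unfolding fbl_admissible_def
  proof (intro allI impI)
    fix x :: 'a assume x: "norm x \<le> 1"
    have "(\<Sum>y\<leftarrow>map blinfun_apply (map (\<lambda>y. (1/t) *\<^sub>R y) L). \<bar>y x\<bar>) = (\<Sum>y\<leftarrow>L. (1/t) * \<bar>blinfun_apply y x\<bar>)"
      using t by (simp add: o_def blinfun.scaleR_left abs_mult)
    also have "\<dots> = (1/t) * (\<Sum>y\<leftarrow>L. \<bar>blinfun_apply y x\<bar>)" by (rule sum_list_scale)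
    also have "(\<Sum>y\<leftarrow>L. \<bar>blinfun_apply y x\<bar>) \<le> s"
      unfolding s_def by (rule cSup_upper[OF _ sumset_bdd]) (use x sumset_def in blast)
    then have "(1/t) * (\<Sum>y\<leftarrow>L. \<bar>blinfun_apply y x\<bar>) \<le> (1/t) * t"
      using t s0 e N_ge0 t_def by (intro mult_left_mono) (auto intro: add_increasing2)
    finally show "(\<Sum>y\<leftarrow>map blinfun_apply (map (\<lambda>y. (1/t) *\<^sub>R y) L). \<bar>y x\<bar>) \<le> 1" using t by simp
  qed
  then have A: "(\<Sum>y\<leftarrow>map (\<lambda>y. (1/t) *\<^sub>R y) L. f y) \<le> N" by (rule adm_le_N)
  have B: "(\<Sum>y\<leftarrow>map (\<lambda>y. (1/t) *\<^sub>R y) L. f y) = (\<Sum>y\<leftarrow>L. f y) / t"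
    using t f_hom by (simp add: o_def sum_list_div)
  have "(\<Sum>y\<leftarrow>L. f y) = t * ((\<Sum>y\<leftarrow>L. f y) / t)" using t by simp
  also have "\<dots> \<le> t * N" using A B t by (intro mult_left_mono) auto
  finally have "(\<Sum>y\<leftarrow>L. f y) \<le> N * t" by (simp add: mult.commute)
  also have "N * t = N * s + N * (e / (N+1))" by (simp add: t_def algebra_simps)
  also have "N * (e / (N+1)) \<le> e" using N_ge0 e by (simp add: field_simps)
  finally show "(\<Sum>y\<leftarrow>L. f y) \<le> N * Sup (sumset L) + e" using s_def by simp
qed

lemma approx_pt:
  assumes e: "e > 0"
  shows "\<exists>x. norm x \<le> 1 \<and> (\<Sum>y\<leftarrow>L. f y) - e \<le> N * (\<Sum>y\<leftarrow>L. \<bar>blinfun_apply y x\<bar>)"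
proof -
  define s where "s = Sup (sumset L)"
  have "s - e / (N+1) < s" using e N_ge0 by simp
  then obtain v where v: "v \<in> sumset L" "s - e / (N+1) < v"
    using less_cSupD[of "sumset L"] sumset_ne s_def by blast
  then obtain x where x: "norm x \<le> 1" "v = (\<Sum>y\<leftarrow>L. \<bar>blinfun_apply y x\<bar>)" unfolding sumset_def by blast
  have "N * (s - e / (N+1)) \<le> N * v" using v N_ge0 by (intro mult_left_mono) auto
  moreover have "N * (s - e / (N+1)) \<ge> N * s - e"
  proof -
    have "N * (e / (N+1)) \<le> e" using N_ge0 e by (simp add: field_simps)
    then show ?thesis by (simp add: right_diff_distrib)
  qed
  ultimately have "N * s - e \<le> N * v" by simp
  then show ?thesis using fsum_le[of L] s_def x by (intro exI[of _ x]) auto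
qed

end


lemma cont_sum_list:
  "(\<And>y. y \<in> set L \<Longrightarrow> continuous_map X euclideanreal (F y)) \<Longrightarrow>
    continuous_map X euclideanreal (\<lambda>z. \<Sum>y\<leftarrow>L. F y z)"
  by (induction L) (auto intro!: continuous_intros)

lemma cbdd:
  assumes "compact_space X" "continuous_map X euclideanreal h"
  shows "\<exists>B. \<forall>x\<in>topspace X. \<bar>h x\<bar> \<le> B"
proof -
  have "compactin euclideanreal (h ` topspace X)"
    using image_compactin assms compact_space_def by blast
  then have "bounded (h ` topspace X)" by (simp add: compact_imp_bounded)
  then show ?thesis unfolding bounded_iff by auto
qed

lemma cbdd_above:
  assumes "compact_space X" "continuous_map X euclideanreal h"
  shows "bdd_above (h ` topspace X)"
proof -
  obtain B where B: "\<forall>x\<in>topspace X. \<bar>h x\<bar> \<le> B" using cbdd[OF assms] by blast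
  show ?thesis unfolding bdd_above_def
  proof (intro exI ballI)
    fix v assume "v \<in> h ` topspace X"
    then obtain x where "x \<in> topspace X" "v = h x" by blast
    then show "v \<le> B" using B abs_le_D1 by blast
  qed
qed

lemma sup_add_le:
  fixes F G :: "'b \<Rightarrow> real"
  assumes "S \<noteq> {}" "bdd_above (F ` S)" "bdd_above (G ` S)"
  shows "Sup ((\<lambda>z. F z + G z) ` S) \<le> Sup (F ` S) + Sup (G ` S)"
proof (rule cSup_least)
  show "(\<lambda>z. F z + G z) ` S \<noteq> {}" using assms by simp
  fix v assume "v \<in> (\<lambda>z. F z + G z) ` S"
  then obtain z where z: "z \<in> S" "v = F z + G z" by blast
  have "F z \<le> Sup (F ` S)" using z assms by (intro cSup_upper) auto
  moreover have "G z \<le> Sup (G ` S)" using z assms by (intro cSup_upper) auto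
  ultimately show "v \<le> Sup (F ` S) + Sup (G ` S)" using z by simp
qed

lemma sup_scale:
  fixes F :: "'b \<Rightarrow> real"
  assumes c: "c > 0" and ne: "S \<noteq> {}" and b: "bdd_above (F ` S)"
  shows "Sup ((\<lambda>z. c * F z) ` S) = c * Sup (F ` S)"
proof (rule antisym)
  show "Sup ((\<lambda>z. c * F z) ` S) \<le> c * Sup (F ` S)"
  proof (rule cSup_least)
    show "(\<lambda>z. c * F z) ` S \<noteq> {}" using ne by simp
    fix v assume "v \<in> (\<lambda>z. c * F z) ` S"
    then obtain z where z: "z \<in> S" "v = c * F z" by blast
    have "F z \<le> Sup (F ` S)" using z b by (intro cSup_upper) auto
    then show "v \<le> c * Sup (F ` S)" using z c by simp
  qed
  have bc: "bdd_above ((\<lambda>z. c * F z) ` S)"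
  proof -
    obtain M where M: "\<forall>x\<in>S. F x \<le> M" using b unfolding bdd_above_def by auto
    have "\<forall>x\<in>S. c * F x \<le> c * M" using M c by (auto intro: mult_left_mono)
    then show ?thesis unfolding bdd_above_def by auto
  qed
  have "Sup (F ` S) \<le> Sup ((\<lambda>z. c * F z) ` S) / c"
  proof (rule cSup_least)
    show "F ` S \<noteq> {}" using ne by simp
    fix v assume "v \<in> F ` S"
    then obtain z where z: "z \<in> S" "v = F z" by blast
    have "c * F z \<le> Sup ((\<lambda>z. c * F z) ` S)" using z bc by (intro cSup_upper) auto
    then show "v \<le> Sup ((\<lambda>z. c * F z) ` S) / c" using z c by (simp add: field_simps)
  qed
  then show "c * Sup (F ` S) \<le> Sup ((\<lambda>z. c * F z) ` S)" using c by (simp add: field_simps)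
qed

context fbl_ctx
begin

abbreviation WS :: "(('a \<Rightarrow>\<^sub>L real) \<Rightarrow>\<^sub>L real) topology" where
  "WS \<equiv> weak_star_bidual_ball"

abbreviation KK :: "(('a \<Rightarrow>\<^sub>L real) \<Rightarrow>\<^sub>L real) set" where
  "KK \<equiv> cball 0 1"

definition gL :: "('a \<Rightarrow>\<^sub>L real) list \<Rightarrow> (('a \<Rightarrow>\<^sub>L real) \<Rightarrow>\<^sub>L real) \<Rightarrow> real" where
  "gL L z = N * (\<Sum>y\<leftarrow>L. \<bar>blinfun_apply z y\<bar>) - (\<Sum>y\<leftarrow>L. f y)"

lemma KK_top: "topspace WS = KK" by (rule topspace_ws)

lemma KK_ne: "KK \<noteq> {}"
proof -
  have "0 \<in> KK" by simp
  then show ?thesis by blast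
qed

lemma gL_cont: "continuous_map WS euclideanreal (gL L)"
proof -
  have "continuous_map WS euclideanreal (\<lambda>z. \<Sum>y\<leftarrow>L. \<bar>blinfun_apply z y\<bar>)"
    by (rule cont_sum_list) (intro continuous_intros eval_cont)
  then show ?thesis unfolding gL_def[abs_def] by (intro continuous_intros)
qed

lemma gL_append: "gL (L1 @ L2) z = gL L1 z + gL L2 z"
  unfolding gL_def by (simp add: algebra_simps)

lemma gL_Nil: "gL [] z = 0" unfolding gL_def by simp

lemma gL_scale: "c > 0 \<Longrightarrow> gL (map (\<lambda>y. c *\<^sub>R y) L) z = c * gL L z"
proof -
  assume c: "c > 0"
  have a: "(\<Sum>y\<leftarrow>map (\<lambda>y. c *\<^sub>R y) L. \<bar>blinfun_apply z y\<bar>) = c * (\<Sum>y\<leftarrow>L. \<bar>blinfun_apply z y\<bar>)"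
    using c by (simp add: o_def blinfun.scaleR_right abs_mult sum_list_scale)
  have b: "(\<Sum>y\<leftarrow>map (\<lambda>y. c *\<^sub>R y) L. f y) = c * (\<Sum>y\<leftarrow>L. f y)"
    using c f_hom by (simp add: o_def sum_list_scale)
  show ?thesis unfolding gL_def a b by (simp add: algebra_simps)
qed

lemma gL_evb: "gL L (evb x) = N * (\<Sum>y\<leftarrow>L. \<bar>blinfun_apply y x\<bar>) - (\<Sum>y\<leftarrow>L. f y)"
  unfolding gL_def by (simp add: evb_apply)

definition VV :: "((('a \<Rightarrow>\<^sub>L real) \<Rightarrow>\<^sub>L real) \<Rightarrow> real) set" where
  "VV = {h. continuous_map WS euclideanreal h}"

definition SS where "SS h L = Sup ((\<lambda>z. h z + gL L z) ` KK)"

definition pp where "pp h = Inf (range (SS h))"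

lemma SS_bdd: "h \<in> VV \<Longrightarrow> bdd_above ((\<lambda>z. h z + gL L z) ` KK)"
proof -
  assume h: "h \<in> VV"
  have "continuous_map WS euclideanreal (\<lambda>z. h z + gL L z)"
    using h gL_cont unfolding VV_def by (intro continuous_intros) auto
  from cbdd_above[OF compact_ws this] show ?thesis unfolding KK_top .
qed

lemma SS_lower: "h \<in> VV \<Longrightarrow> \<exists>c. \<forall>L. c \<le> SS h L"
proof -
  assume h: "h \<in> VV"
  obtain B where B: "\<forall>z\<in>KK. \<bar>h z\<bar> \<le> B"
    using cbdd[OF compact_ws, of h] h KK_top unfolding VV_def by auto
  have "- B - 1 \<le> SS h L" for L
  proof -
    obtain x where x: "norm x \<le> 1" "(\<Sum>y\<leftarrow>L. f y) - 1 \<le> N * (\<Sum>y\<leftarrow>L. \<bar>blinfun_apply y x\<bar>)"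
      using approx_pt[of 1 L] by auto
    have ex: "evb x \<in> KK" using evb_ball[OF x(1)] .
    have "h (evb x) + gL L (evb x) \<le> SS h L"
      unfolding SS_def using ex SS_bdd[OF h] by (intro cSup_upper) auto
    moreover have "gL L (evb x) \<ge> -1" using x(2) gL_evb by simp
    moreover have "h (evb x) \<ge> - B" using B ex by force
    ultimately show ?thesis by simp
  qed
  then show ?thesis by blast
qed

lemma pp_le: "h \<in> VV \<Longrightarrow> pp h \<le> SS h L"
proof -
  assume h: "h \<in> VV"
  obtain c where c: "\<forall>L. c \<le> SS h L" using SS_lower[OF h] by blast
  have "bdd_below (range (SS h))" using c unfolding bdd_below_def by auto
  then show ?thesis unfolding pp_def by (intro cInf_lower) auto
qed

lemma pp_ge: "(\<And>L. c \<le> SS h L) \<Longrightarrow> c \<le> pp h"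
  unfolding pp_def by (intro cInf_greatest) auto

lemma SS_Nil: "SS h [] = Sup (h ` KK)"
  unfolding SS_def gL_Nil by simp

lemma VV_add: "h \<in> VV \<Longrightarrow> k \<in> VV \<Longrightarrow> fadd h k \<in> VV"
  unfolding VV_def fadd_def by (auto intro: continuous_intros)

lemma VV_sc: "h \<in> VV \<Longrightarrow> fsc c h \<in> VV"
  unfolding VV_def fsc_def by (auto intro: continuous_intros)

lemma pp_sub: "h1 \<in> VV \<Longrightarrow> h2 \<in> VV \<Longrightarrow> pp (fadd h1 h2) \<le> pp h1 + pp h2"
proof -
  assume h1: "h1 \<in> VV" and h2: "h2 \<in> VV"
  have key: "pp (fadd h1 h2) \<le> SS h1 L1 + SS h2 L2" for L1 L2
  proof -
    have "pp (fadd h1 h2) \<le> SS (fadd h1 h2) (L1 @ L2)" by (rule pp_le[OF VV_add[OF h1 h2]])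
    also have "SS (fadd h1 h2) (L1 @ L2) = Sup ((\<lambda>z. (h1 z + gL L1 z) + (h2 z + gL L2 z)) ` KK)"
      unfolding SS_def fadd_def gL_append by (simp add: algebra_simps)
    also have "\<dots> \<le> SS h1 L1 + SS h2 L2"
      unfolding SS_def using KK_ne SS_bdd[OF h1] SS_bdd[OF h2] by (rule sup_add_le)
    finally show ?thesis .
  qed
  have "pp (fadd h1 h2) - SS h2 L2 \<le> pp h1" for L2
    by (rule pp_ge) (use key in \<open>simp add: algebra_simps\<close>)
  then have "pp (fadd h1 h2) - pp h1 \<le> pp h2"
    by (intro pp_ge) (simp add: algebra_simps)
  then show ?thesis by simp
qed

lemma pp_hom_le: "h \<in> VV \<Longrightarrow> c > 0 \<Longrightarrow> pp (fsc c h) \<le> c * pp h"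
proof -
  assume h: "h \<in> VV" and c: "c > 0"
  have "pp (fsc c h) / c \<le> SS h L" for L
  proof -
    have "pp (fsc c h) \<le> SS (fsc c h) (map (\<lambda>y. c *\<^sub>R y) L)" by (rule pp_le[OF VV_sc[OF h]])
    also have "\<dots> = Sup ((\<lambda>z. c * (h z + gL L z)) ` KK)"
      unfolding SS_def fsc_def using c by (simp add: gL_scale algebra_simps)
    also have "\<dots> = c * SS h L" unfolding SS_def using c KK_ne SS_bdd[OF h] by (rule sup_scale)
    finally show ?thesis using c by (simp add: field_simps)
  qed
  then have "pp (fsc c h) / c \<le> pp h" by (rule pp_ge)
  then show ?thesis using c by (simp add: field_simps)
qed

lemma pp_hom: "h \<in> VV \<Longrightarrow> c > 0 \<Longrightarrow> pp (fsc c h) = c * pp h"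
proof -
  assume h: "h \<in> VV" and c: "c > 0"
  have "fsc (1/c) (fsc c h) = h" using c by (auto simp: fsc_def)
  moreover have "pp (fsc (1/c) (fsc c h)) \<le> (1/c) * pp (fsc c h)"
    by (rule pp_hom_le[OF VV_sc[OF h]]) (use c in simp)
  ultimately have "pp h \<le> (1/c) * pp (fsc c h)" by simp
  then have "c * pp h \<le> pp (fsc c h)" using c by (simp add: field_simps)
  then show ?thesis using pp_hom_le[OF h c] by simp
qed

lemma hb: "hb_setting VV pp"
proof
  show "(\<lambda>_. 0) \<in> VV" unfolding VV_def by simp
qed (auto simp: VV_add VV_sc pp_sub pp_hom)

end


context fbl_ctx
begin

theorem main:
  "\<exists>\<mu> :: (('a \<Rightarrow>\<^sub>L real) \<Rightarrow>\<^sub>L real) measure.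
     prob_space \<mu> \<and> sets \<mu> = sets (borel_of weak_star_bidual_ball) \<and>
     space \<mu> = topspace weak_star_bidual_ball \<and> regular_measure_on weak_star_bidual_ball \<mu> \<and>
     (\<forall>xs :: 'a \<Rightarrow>\<^sub>L real. f xs \<le> fbl_norm f * (\<integral>z. \<bar>z xs\<bar> \<partial>\<mu>))"
proof -
  interpret H: hb_setting VV pp by (rule hb)
  obtain \<phi> where phi_add: "\<And>x y. x \<in> VV \<Longrightarrow> y \<in> VV \<Longrightarrow> \<phi> (fadd x y) = \<phi> x + \<phi> y"
    and phi_sc: "\<And>x c. x \<in> VV \<Longrightarrow> \<phi> (fsc c x) = c * \<phi> x"
    and phi_le: "\<And>x. x \<in> VV \<Longrightarrow> \<phi> x \<le> pp x"
    using H.hahn_banach by blast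
  have rs: "riesz_setting WS \<phi>"
  proof
    show "compact_space WS" by (rule compact_ws)
    show "Hausdorff_space WS" by (rule hausdorff_ws)
    show "topspace WS \<noteq> {}" using KK_top KK_ne by simp
  next
    fix h k assume "continuous_map WS euclideanreal h" "continuous_map WS euclideanreal k"
    then show "\<phi> (\<lambda>x. h x + k x) = \<phi> h + \<phi> k"
      using phi_add[of h k] unfolding VV_def fadd_def by simp
  next
    fix c h assume "continuous_map WS euclideanreal h"
    then show "\<phi> (\<lambda>x. c * h x) = c * \<phi> h"
      using phi_sc[of h c] unfolding VV_def fsc_def by simp
  next
    fix h assume h: "continuous_map WS euclideanreal h"
    then have "h \<in> VV" unfolding VV_def by simp
    then have "\<phi> h \<le> SS h []" using phi_le[of h] pp_le[of h "[]"] by linarith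
    then show "\<phi> h \<le> Sup (h ` topspace WS)" using SS_Nil KK_top by simp
  qed
  interpret R: riesz_setting WS \<phi> by (rule rs)
  obtain \<mu> where mu: "prob_space \<mu>" "sets \<mu> = sets (borel_of WS)" "space \<mu> = topspace WS"
    "regular_measure_on WS \<mu>"
    "\<forall>h. continuous_map WS euclideanreal h \<and> (\<forall>x\<in>topspace WS. 0 \<le> h x) \<longrightarrow> \<phi> h \<le> (\<integral>x. h x \<partial>\<mu>)"
    using R.riesz_exists by metis
  have ineq: "f y \<le> N * (\<integral>z. \<bar>z y\<bar> \<partial>\<mu>)" for y
  proof -
    define hy where "hy = (\<lambda>z :: ('a \<Rightarrow>\<^sub>L real) \<Rightarrow>\<^sub>L real. \<bar>blinfun_apply z y\<bar>)"
    have hyC: "continuous_map WS euclideanreal hy" unfolding hy_def by (intro continuous_intros eval_cont)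
    define g1 where "g1 = gL [y]"
    have g1V: "g1 \<in> VV" unfolding g1_def VV_def using gL_cont by simp
    have g1e: "g1 = (\<lambda>z. N * hy z - (\<lambda>_. f y) z)" unfolding g1_def hy_def gL_def[abs_def] by simp
    have "\<phi> (fsc (-1) g1) \<le> pp (fsc (-1) g1)" using phi_le VV_sc[OF g1V] by blast
    also have "\<dots> \<le> SS (fsc (-1) g1) [y]" by (rule pp_le[OF VV_sc[OF g1V]])
    also have "SS (fsc (-1) g1) [y] = Sup ((\<lambda>_. 0::real) ` KK)"
      unfolding SS_def fsc_def g1_def by simp
    also have "\<dots> = 0" using KK_ne by simp
    finally have "- \<phi> g1 \<le> 0" using phi_sc[OF g1V, of "-1"] by simp
    moreover have "\<phi> g1 = N * \<phi> hy - f y"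
    proof -
      have "\<phi> g1 = \<phi> (\<lambda>z. N * hy z) - \<phi> (\<lambda>_. f y)"
        unfolding g1e using hyC by (intro R.phi_diff continuous_intros)
      also have "\<dots> = N * \<phi> hy - f y" using R.lin_sc[OF hyC] R.phi_const by simp
      finally show ?thesis .
    qed
    ultimately have "f y \<le> N * \<phi> hy" by simp
    also have "\<dots> \<le> N * (\<integral>z. hy z \<partial>\<mu>)"
    proof (rule mult_left_mono[OF _ N_ge0])
      show "\<phi> hy \<le> (\<integral>z. hy z \<partial>\<mu>)" using mu(5) hyC unfolding hy_def by simp
    qed
    finally show ?thesis unfolding hy_def .
  qed
  show ?thesis
  proof (intro exI[of _ \<mu>] conjI allI)
    fix xs :: "'a \<Rightarrow>\<^sub>L real"
    show "f xs \<le> fbl_norm f * (\<integral>z. \<bar>z xs\<bar> \<partial>\<mu>)" using ineq[of xs] unfolding N_def .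
  qed (use mu in auto)
qed

end

theorem proposition2p12:
  fixes f :: "('a::banach \<Rightarrow>\<^sub>L real) \<Rightarrow> real"
  assumes "f \<in> H0_pos"
  shows "\<exists>\<mu> :: (('a \<Rightarrow>\<^sub>L real) \<Rightarrow>\<^sub>L real) measure.
           prob_space \<mu> \<and>
           sets \<mu> = sets (borel_of weak_star_bidual_ball) \<and>
           space \<mu> = topspace weak_star_bidual_ball \<and>
           regular_measure_on weak_star_bidual_ball \<mu> \<and>
           (\<forall>xs :: 'a \<Rightarrow>\<^sub>L real. f xs \<le> fbl_norm f * (\<integral>z. \<bar>z xs\<bar> \<partial>\<mu>))"
proof -
  interpret fbl_ctx f by unfold_locales (rule assms)
  show ?thesis by (rule main)
qed


end
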